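(* Let $\mathcal M=(\mathbf M^{(\lambda)})_{\lambda>0}$ be a weight matrix on $\mathbb N_0^d$. (Beurling) Assume (B1): for every $\lambda>0$ there exist $0<\kappa\le\lambda$ and $H>0$ such that for every $C>0$ there is $B>0$ with $\alpha^{\alpha/2}M^{(\kappa)}_\beta\le BC^{|\alpha|}H^{|\alpha+\beta|}M^{(\lambda)}_{\alpha+\beta}$ for all $\alpha,\beta$; and (B2): for every $\lambda>0$ there exist $0<\kappa\le\lambda$, $A\ge1$ with $M^{(\kappa)}_{\alpha+e_j}\le A^{|\alpha|+1}M^{(\lambda)}_\alpha$ for all $\alpha$ and $1\le j\le d$. Then: - there exists $C_1>0$ such that for all $\lambda,h>0$ there exist $\kappa>0$ and $\tilde h>0$ with $\|f\|_{2,\mathbf M^{(\lambda)},h}\le C_1\|f\|_{\infty,\mathbf M^{(\kappa)},\tilde h}$ for all $f\in C^\infty(\mathbb R^d)$; - for all $\lambda,h>0$ there exist $\tilde\kappa>0$, $C_{\lambda,h}>0$, $\tilde h>0$ with $\|f\|_{\infty,\mathbf M^{(\lambda)},h}\le C_{\lambda,h}\|f\|_{2,\mathbf M^{(\tilde\kappa)},\tilde h}$ for all $f\in C^\infty(\mathbb R^d)$. (Roumieu) Assume (R1): for every $\lambda>0$ there exist $\kappa\ge\lambda$ and $B,C,H>0$ with $\alpha^{\alpha/2}M^{(\lambda)}_\beta\le BC^{|\alpha|}H^{|\alpha+\beta|}M^{(\kappa)}_{\alpha+\beta}$ for all $\alpha,\beta$; and (R2): for every $\lambda>0$ there exist $\kappa\ge\lambda$,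 $A\ge1$ with $M^{(\lambda)}_{\alpha+e_j}\le A^{|\alpha|+1}M^{(\kappa)}_\alpha$ for all $\alpha$ and $1\le j\le d$. Then: - for all $\lambda,h>0$ there exist $C_{\lambda,h}>0$, $\kappa\ge\lambda$, $\tilde h>0$ with $\|f\|_{2,\mathbf M^{(\kappa)},\tilde h}\le C_{\lambda,h}\|f\|_{\infty,\mathbf M^{(\lambda)},h}$ for all $f\in C^\infty(\mathbb R^d)$; - for all $\lambda,h>0$ there exist $C_{\lambda,h}>0$, $\tilde\kappa>0$, $\tilde h>0$ with $\|f\|_{\infty,\mathbf M^{(\tilde\kappa)},\tilde h}\le C_{\lambda,h}\|f\|_{2,\mathbf M^{(\lambda)},h}$ for all $f\in C^\infty(\mathbb R^d)$. In particular, the systems of seminorms $\{\|\cdot\|_{\infty,\mathbf M^{(\lambda)},h}\}$ and $\{\|\cdot\|_{2,\mathbf M^{(\lambda)},h}\}$ are equivalent on $\mathcal S_{(\mathcal M)}$ in the Beurling case and on $\mathcal S_{\{\mathcal M\}}$ in the Roumieu case.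
   Context: A weight matrix is a family $\mathcal M=(\mathbf M^{(\lambda)})_{\lambda>0}$ with $\mathbf M^{(\lambda)}=(M^{(\lambda)}_\alpha)_{\alpha\in\mathbb N_0^d}$ sequences of positive reals, $M^{(\lambda)}_0=1$, and $M^{(\lambda)}_\alpha\le M^{(\kappa)}_\alpha$ for all $\alpha$ whenever $0<\lambda\le\kappa$. Notation: $|\alpha|=\sum\alpha_j$, $e_j$ the $j$-th unit vector, $\alpha^{\alpha/2}=\prod_j\alpha_j^{\alpha_j/2}$ with $0^0=1$. For a sequence $\mathbf M$ and $h>0$: $\|f\|_{\infty,\mathbf M,h}:=\sup_{\alpha,\beta\in\mathbb N_0^d}\frac{\|x^\alpha\partial^\beta f\|_\infty}{h^{|\alpha+\beta|}M_{\alpha+\beta}}$ and $\|f\|_{2,\mathbf M,h}:=\sup_{\alpha,\beta\in\mathbb N_0^d}\frac{\|x^\alpha\partial^\beta f\|_{L^2}}{h^{|\alpha+\beta|}M_{\alpha+\beta}}$ (values in $[0,+\infty]$). $\mathcal S_{\{\mathcal M\}}$ ($\mathcal S_{(\mathcal M)}$) is the set of $f\in C^\infty(\mathbb R^d)$ with $\|f\|_{\infty,\mathbf M^{(\lambda)},h}<\infty$ for some (for all) $\lambda,h>0$. *)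

theory Defs
  imports "HOL-Analysis.Analysis"
begin

text \<open>Multi-indices in N_0^d are functions 'n => nat, where the finite type 'n
  indexes the coordinates of R^d = real^'n.\<close>

definition mabs :: "('n::finite \<Rightarrow> nat) \<Rightarrow> nat" where
  "mabs \<alpha> = (\<Sum>i\<in>UNIV. \<alpha> i)"

definition madd :: "('n \<Rightarrow> nat) \<Rightarrow> ('n \<Rightarrow> nat) \<Rightarrow> ('n \<Rightarrow> nat)" where
  "madd \<alpha> \<beta> = (\<lambda>i. \<alpha> i + \<beta> i)"

definition unit_mi :: "'n \<Rightarrow> ('n \<Rightarrow> nat)" where
  "unit_mi j = (\<lambda>i. if i = j then 1 else 0)"

text \<open>alpha^(alpha/2) = prod_j alpha_j^(alpha_j/2), with 0^0 = 1.\<close>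
definition mi_halfpow :: "('n::finite \<Rightarrow> nat) \<Rightarrow> real" where
  "mi_halfpow \<alpha> = (\<Prod>i\<in>UNIV. sqrt (real (\<alpha> i ^ \<alpha> i)))"

definition monom_mi :: "('n::finite \<Rightarrow> nat) \<Rightarrow> real^'n \<Rightarrow> real" where
  "monom_mi \<alpha> x = (\<Prod>i\<in>UNIV. (x $ i) ^ \<alpha> i)"

definition pdir :: "'n::finite \<Rightarrow> (real^'n \<Rightarrow> complex) \<Rightarrow> real^'n \<Rightarrow> complex" where
  "pdir j f x = vector_derivative (\<lambda>t. f (x + t *\<^sub>R axis j 1)) (at 0)"

primrec pdirs :: "'n::finite list \<Rightarrow> (real^'n \<Rightarrow> complex) \<Rightarrow> real^'n \<Rightarrow> complex" where
  "pdirs [] f = f"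
| "pdirs (j # js) f = pdir j (pdirs js f)"

definition smooth :: "(real^'n::finite \<Rightarrow> complex) \<Rightarrow> bool" where
  "smooth f \<longleftrightarrow>
     (\<forall>js. continuous_on UNIV (pdirs js f)) \<and>
     (\<forall>js j x. (\<lambda>t. pdirs js f (x + t *\<^sub>R axis j 1)) differentiable (at (0::real)))"

text \<open>partial^beta f: differentiate beta_j times in direction j (for smooth f the
  order is irrelevant by Schwarz's theorem).\<close>
definition mpderiv :: "('n::finite \<Rightarrow> nat) \<Rightarrow> (real^'n \<Rightarrow> complex) \<Rightarrow> real^'n \<Rightarrow> complex" where
  "mpderiv \<beta> f = pdirs (SOME js. \<forall>i. count_list js i = \<beta> i) f"

definition sup_norm :: "(real^'n::finite \<Rightarrow> complex) \<Rightarrow> ennreal" where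
  "sup_norm g = (SUP x. ennreal (norm (g x)))"

definition L2_norm :: "(real^'n::finite \<Rightarrow> complex) \<Rightarrow> ennreal" where
  "L2_norm g = (let s = (\<integral>\<^sup>+ x. ennreal ((norm (g x))\<^sup>2) \<partial>lborel)
                in if s = \<infinity> then \<infinity> else ennreal (sqrt (enn2real s)))"

definition wnorm_inf :: "(('n::finite \<Rightarrow> nat) \<Rightarrow> real) \<Rightarrow> real \<Rightarrow> (real^'n \<Rightarrow> complex) \<Rightarrow> ennreal" where
  "wnorm_inf M h f = (SUP \<alpha>. SUP \<beta>.
      sup_norm (\<lambda>x. complex_of_real (monom_mi \<alpha> x) * mpderiv \<beta> f x)
      * ennreal (1 / (h ^ mabs (madd \<alpha> \<beta>) * M (madd \<alpha> \<beta>))))"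

definition wnorm_2 :: "(('n::finite \<Rightarrow> nat) \<Rightarrow> real) \<Rightarrow> real \<Rightarrow> (real^'n \<Rightarrow> complex) \<Rightarrow> ennreal" where
  "wnorm_2 M h f = (SUP \<alpha>. SUP \<beta>.
      L2_norm (\<lambda>x. complex_of_real (monom_mi \<alpha> x) * mpderiv \<beta> f x)
      * ennreal (1 / (h ^ mabs (madd \<alpha> \<beta>) * M (madd \<alpha> \<beta>))))"

text \<open>Weight matrix: M l is the sequence M^(l), for l > 0.\<close>
definition weight_matrix :: "(real \<Rightarrow> ('n::finite \<Rightarrow> nat) \<Rightarrow> real) \<Rightarrow> bool" where
  "weight_matrix M \<longleftrightarrow>
     (\<forall>l>0. (\<forall>\<alpha>. M l \<alpha> > 0) \<and> M l (\<lambda>_. 0) = 1) \<and>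
     (\<forall>l k \<alpha>. 0 < l \<longrightarrow> l \<le> k \<longrightarrow> M l \<alpha> \<le> M k \<alpha>)"

end

theory Submission
  imports Defs
begin

lemma mvt_bnd_aux:
  fixes F :: "real \<Rightarrow> 'a::real_normed_vector"
  assumes "a < b" and D: "\<And>t. (F has_vector_derivative F' t) (at t)"
    and B: "\<And>t. t \<in> {a..b} \<Longrightarrow> norm (F' t) \<le> B"
  shows "norm (F b - F a) \<le> B * (b - a)"
proof -
  have c: "continuous_on {a..b} F"
    using D by (meson continuous_at_imp_continuous_on has_vector_derivative_continuous)
  have "norm (F b - F a) \<le> (\<lambda>x. B * x) b - (\<lambda>x. B * x) a"
    apply (rule differentiable_bound_general[OF assms(1) c, where \<phi>' = "\<lambda>_. B"])
    apply (intro continuous_intros)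
    apply (rule D)
    apply (auto intro!: derivative_eq_intros simp: B)
    done
  then show ?thesis by (simp add: algebra_simps)
qed

lemma mvt_bnd:
  fixes F :: "real \<Rightarrow> 'a::real_normed_vector"
  assumes D: "\<And>t. (F has_vector_derivative F' t) (at t)"
    and B: "\<And>t. t \<in> closed_segment a b \<Longrightarrow> norm (F' t) \<le> B"
  shows "norm (F b - F a) \<le> B * \<bar>b - a\<bar>"
proof (cases a b rule: linorder_cases)
  case less
  then show ?thesis using mvt_bnd_aux[of a b F F' B] D B
    by (auto simp: closed_segment_eq_real_ivl)
next
  case equal then show ?thesis by simp
next
  case greater
  then have "norm (F a - F b) \<le> B * (a - b)" using mvt_bnd_aux[of b a F F' B] D B
    by (auto simp: closed_segment_eq_real_ivl)
  then show ?thesis using greater by (simp add: norm_minus_commute)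
qed

lemma pdirs_append: "pdirs (js @ ks) f = pdirs js (pdirs ks f)"
  by (induction js) auto

lemma smooth_pdirs: "smooth f \<Longrightarrow> smooth (pdirs ks f)"
  unfolding smooth_def by (simp add: pdirs_append[symmetric])

lemma smooth_cont: "smooth f \<Longrightarrow> continuous_on UNIV f"
  unfolding smooth_def by (metis pdirs.simps(1))

lemma smooth_pdir: "smooth f \<Longrightarrow> smooth (pdir j f)"
  using smooth_pdirs[of f "[j]"] by simp

lemma line_deriv:
  assumes "smooth g"
  shows "((\<lambda>t. g (y + t *\<^sub>R axis j 1)) has_vector_derivative pdir j g (y + t0 *\<^sub>R axis j 1)) (at t0)"
proof -
  let ?y = "y + t0 *\<^sub>R axis j 1"
  have "(\<lambda>t. g (?y + t *\<^sub>R axis j 1)) differentiable (at 0)"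
    using assms unfolding smooth_def by (metis pdirs.simps(1))
  then have d: "((\<lambda>t. g (?y + t *\<^sub>R axis j 1)) has_vector_derivative pdir j g ?y) (at ((\<lambda>t. t - t0) t0))"
    unfolding pdir_def by (simp add: vector_derivative_works[symmetric])
  have "((\<lambda>t. t - t0) has_vector_derivative 1) (at t0)"
    by (auto intro!: derivative_eq_intros)
  from vector_diff_chain_at[OF this d]
  have "((\<lambda>t. g (?y + (t - t0) *\<^sub>R axis j 1)) has_vector_derivative pdir j g ?y) (at t0)"
    by (simp add: o_def)
  moreover have "(\<lambda>t. g (?y + (t - t0) *\<^sub>R axis j 1)) = (\<lambda>t. g (y + t *\<^sub>R axis j 1))"
    by (auto simp: algebra_simps)
  ultimately show ?thesis by simp
qed

lemma hvd_lin: "((\<lambda>s. s *\<^sub>R v) has_vector_derivative v) (at x)"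
  using has_vector_derivative_scaleR[OF DERIV_ident has_vector_derivative_const[of v]] by simp

lemma rect_bound:
  assumes h: "smooth h"
    and B: "\<And>\<sigma> \<tau>. \<sigma> \<in> closed_segment 0 s \<Longrightarrow> \<tau> \<in> closed_segment 0 t \<Longrightarrow>
      norm (pdir j (pdir i h) (x + \<sigma> *\<^sub>R axis i 1 + \<tau> *\<^sub>R axis j 1) - c) \<le> \<epsilon>"
  shows "norm (h (x + s *\<^sub>R axis i 1 + t *\<^sub>R axis j 1) - h (x + s *\<^sub>R axis i 1)
              - h (x + t *\<^sub>R axis j 1) + h x - (s * t) *\<^sub>R c) \<le> \<epsilon> * \<bar>t\<bar> * \<bar>s\<bar>"
proof -
  have hi: "smooth (pdir i h)" using h by (rule smooth_pdir)
  have step1: "norm (pdir i h (x + \<sigma> *\<^sub>R axis i 1 + t *\<^sub>R axis j 1) - pdir i h (x + \<sigma> *\<^sub>R axis i 1) - t *\<^sub>R c)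
      \<le> \<epsilon> * \<bar>t\<bar>" if \<sigma>: "\<sigma> \<in> closed_segment 0 s" for \<sigma>
  proof -
    let ?F = "\<lambda>\<tau>. pdir i h (x + \<sigma> *\<^sub>R axis i 1 + \<tau> *\<^sub>R axis j 1) - \<tau> *\<^sub>R c"
    have "norm (?F t - ?F 0) \<le> \<epsilon> * \<bar>t - 0\<bar>"
    proof (rule mvt_bnd)
      fix \<tau>
      have d: "((\<lambda>t. pdir i h ((x + \<sigma> *\<^sub>R axis i 1) + t *\<^sub>R axis j 1)) has_vector_derivative
          pdir j (pdir i h) ((x + \<sigma> *\<^sub>R axis i 1) + \<tau> *\<^sub>R axis j 1)) (at \<tau>)"
        by (rule line_deriv[OF hi])
      show "(?F has_vector_derivative (pdir j (pdir i h) (x + \<sigma> *\<^sub>R axis i 1 + \<tau> *\<^sub>R axis j 1) - c)) (at \<tau>)"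
        by (rule has_vector_derivative_diff[OF d hvd_lin])
    next
      fix \<tau> assume "\<tau> \<in> closed_segment 0 t"
      then show "norm (pdir j (pdir i h) (x + \<sigma> *\<^sub>R axis i 1 + \<tau> *\<^sub>R axis j 1) - c) \<le> \<epsilon>"
        using B \<sigma> by blast
    qed
    then show ?thesis by (simp add: algebra_simps)
  qed
  let ?G = "\<lambda>\<sigma>. h (x + t *\<^sub>R axis j 1 + \<sigma> *\<^sub>R axis i 1) - h (x + \<sigma> *\<^sub>R axis i 1) - (\<sigma> * t) *\<^sub>R c"
  have "norm (?G s - ?G 0) \<le> (\<epsilon> * \<bar>t\<bar>) * \<bar>s - 0\<bar>"
  proof (rule mvt_bnd)
    fix \<sigma>
    have e: "?G = (\<lambda>\<sigma>. h ((x + t *\<^sub>R axis j 1) + \<sigma> *\<^sub>R axis i 1) - h (x + \<sigma> *\<^sub>R axis i 1) - \<sigma> *\<^sub>R (t *\<^sub>R c))"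
      by (auto simp: algebra_simps)
    have d1: "((\<lambda>\<sigma>. h ((x + t *\<^sub>R axis j 1) + \<sigma> *\<^sub>R axis i 1)) has_vector_derivative pdir i h ((x + t *\<^sub>R axis j 1) + \<sigma> *\<^sub>R axis i 1)) (at \<sigma>)"
      by (rule line_deriv[OF h])
    have d2: "((\<lambda>\<sigma>. h (x + \<sigma> *\<^sub>R axis i 1)) has_vector_derivative pdir i h (x + \<sigma> *\<^sub>R axis i 1)) (at \<sigma>)"
      by (rule line_deriv[OF h])
    have d3: "((\<lambda>\<sigma>. \<sigma> *\<^sub>R (t *\<^sub>R c)) has_vector_derivative t *\<^sub>R c) (at \<sigma>)"
      by (rule hvd_lin)
    show "(?G has_vector_derivative (pdir i h (x + t *\<^sub>R axis j 1 + \<sigma> *\<^sub>R axis i 1)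
        - pdir i h (x + \<sigma> *\<^sub>R axis i 1) - t *\<^sub>R c)) (at \<sigma>)"
      unfolding e by (rule has_vector_derivative_diff[OF has_vector_derivative_diff[OF d1 d2] d3])
  next
    fix \<sigma> assume "\<sigma> \<in> closed_segment 0 s"
    from step1[OF this]
    show "norm (pdir i h (x + t *\<^sub>R axis j 1 + \<sigma> *\<^sub>R axis i 1) - pdir i h (x + \<sigma> *\<^sub>R axis i 1) - t *\<^sub>R c) \<le> \<epsilon> * \<bar>t\<bar>"
      by (simp add: algebra_simps)
  qed
  then show ?thesis by (simp add: algebra_simps)
qed

lemma schwarz:
  assumes h: "smooth h"
  shows "pdir j (pdir i h) x = pdir i (pdir j h) x"
proof (rule ccontr)
  let ?c1 = "pdir j (pdir i h) x" and ?c2 = "pdir i (pdir j h) x"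
  assume ne: "?c1 \<noteq> ?c2"
  define \<epsilon> where "\<epsilon> = norm (?c1 - ?c2) / 4"
  have \<epsilon>: "\<epsilon> > 0" using ne by (simp add: \<epsilon>_def)
  have c1: "continuous_on UNIV (pdir j (pdir i h))"
    using h unfolding smooth_def by (metis pdirs.simps)
  have c2: "continuous_on UNIV (pdir i (pdir j h))"
    using h unfolding smooth_def by (metis pdirs.simps)
  obtain d1 where d1: "d1 > 0" "\<And>z. dist z x < d1 \<Longrightarrow> dist (pdir j (pdir i h) z) ?c1 < \<epsilon>"
    using c1 \<epsilon> unfolding continuous_on_iff by blast
  obtain d2 where d2: "d2 > 0" "\<And>z. dist z x < d2 \<Longrightarrow> dist (pdir i (pdir j h) z) ?c2 < \<epsilon>"
    using c2 \<epsilon> unfolding continuous_on_iff by blast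
  define s where "s = min d1 d2 / 3"
  have s: "s > 0" "2 * s < d1" "2 * s < d2" using d1 d2 by (auto simp: s_def)
  have near: "dist (x + \<sigma> *\<^sub>R axis a 1 + \<tau> *\<^sub>R axis b 1) x \<le> 2 * s"
    if "\<sigma> \<in> closed_segment 0 s" "\<tau> \<in> closed_segment 0 s" for \<sigma> \<tau> a b
  proof -
    have "\<bar>\<sigma>\<bar> \<le> s" "\<bar>\<tau>\<bar> \<le> s" using that s by (auto simp: closed_segment_eq_real_ivl)
    moreover have "dist (x + \<sigma> *\<^sub>R axis a 1 + \<tau> *\<^sub>R axis b 1) x = norm (\<sigma> *\<^sub>R axis a (1::real) + \<tau> *\<^sub>R axis b (1::real))"
      by (simp add: dist_norm)
    moreover have "norm (\<sigma> *\<^sub>R axis a (1::real) + \<tau> *\<^sub>R axis b (1::real)) \<le> norm (\<sigma> *\<^sub>R axis a (1::real)) + norm (\<tau> *\<^sub>R axis b (1::real))"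
      by (rule norm_triangle_ineq)
    moreover have "norm (\<sigma> *\<^sub>R axis a (1::real)) = \<bar>\<sigma>\<bar>" "norm (\<tau> *\<^sub>R axis b (1::real)) = \<bar>\<tau>\<bar>" by simp_all
    ultimately show ?thesis by linarith
  qed
  let ?D = "h (x + s *\<^sub>R axis i 1 + s *\<^sub>R axis j 1) - h (x + s *\<^sub>R axis i 1) - h (x + s *\<^sub>R axis j 1) + h x"
  have A: "norm (?D - (s * s) *\<^sub>R ?c1) \<le> \<epsilon> * \<bar>s\<bar> * \<bar>s\<bar>"
  proof (rule rect_bound[OF h])
    fix \<sigma> \<tau> assume "\<sigma> \<in> closed_segment 0 s" "\<tau> \<in> closed_segment 0 s"
    then have "dist (pdir j (pdir i h) (x + \<sigma> *\<^sub>R axis i 1 + \<tau> *\<^sub>R axis j 1)) ?c1 < \<epsilon>"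
      using near[of \<sigma> \<tau> i j] s d1(2)[of "x + \<sigma> *\<^sub>R axis i 1 + \<tau> *\<^sub>R axis j 1"] by linarith
    then show "norm (pdir j (pdir i h) (x + \<sigma> *\<^sub>R axis i 1 + \<tau> *\<^sub>R axis j 1) - ?c1) \<le> \<epsilon>"
      by (simp add: dist_norm)
  qed
  have B: "norm (h (x + s *\<^sub>R axis j 1 + s *\<^sub>R axis i 1) - h (x + s *\<^sub>R axis j 1) - h (x + s *\<^sub>R axis i 1) + h x - (s * s) *\<^sub>R ?c2) \<le> \<epsilon> * \<bar>s\<bar> * \<bar>s\<bar>"
  proof (rule rect_bound[OF h])
    fix \<sigma> \<tau> assume "\<sigma> \<in> closed_segment 0 s" "\<tau> \<in> closed_segment 0 s"
    then have "dist (pdir i (pdir j h) (x + \<sigma> *\<^sub>R axis j 1 + \<tau> *\<^sub>R axis i 1)) ?c2 < \<epsilon>"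
      using near[of \<sigma> \<tau> j i] s d2(2)[of "x + \<sigma> *\<^sub>R axis j 1 + \<tau> *\<^sub>R axis i 1"] by linarith
    then show "norm (pdir i (pdir j h) (x + \<sigma> *\<^sub>R axis j 1 + \<tau> *\<^sub>R axis i 1) - ?c2) \<le> \<epsilon>"
      by (simp add: dist_norm)
  qed
  have B': "norm (?D - (s * s) *\<^sub>R ?c2) \<le> \<epsilon> * \<bar>s\<bar> * \<bar>s\<bar>"
    using B by (simp add: algebra_simps)
  have "norm ((s * s) *\<^sub>R (?c1 - ?c2)) \<le> norm (?D - (s * s) *\<^sub>R ?c2) + norm (?D - (s * s) *\<^sub>R ?c1)"
  proof -
    have "(s * s) *\<^sub>R (?c1 - ?c2) = (?D - (s * s) *\<^sub>R ?c2) - (?D - (s * s) *\<^sub>R ?c1)"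
      by (simp add: algebra_simps)
    then show ?thesis using norm_triangle_ineq4 by metis
  qed
  also have "\<dots> \<le> 2 * \<epsilon> * (s * s)" using A B' s by (simp add: abs_mult_self_eq)
  finally have "(s * s) * norm (?c1 - ?c2) \<le> 2 * \<epsilon> * (s * s)" using s by simp
  then have "norm (?c1 - ?c2) \<le> 2 * \<epsilon>" using s by simp
  then show False using \<epsilon> by (simp add: \<epsilon>_def)
qed

lemma pdir_comm_pdirs:
  assumes "smooth g"
  shows "pdirs ks (pdir a g) = pdir a (pdirs ks g)"
  using assms
proof (induction ks)
  case Nil then show ?case by simp
next
  case (Cons k ks)
  have "pdirs (k # ks) (pdir a g) = pdir k (pdir a (pdirs ks g))"
    using Cons by simp
  also have "\<dots> = pdir a (pdir k (pdirs ks g))"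
    by (rule ext, rule schwarz[OF smooth_pdirs[OF Cons.prems, of ks]])
  finally show ?case by simp
qed

lemma count_replicate: "count_list (replicate n a) i = (if i = a then n else 0)"
  by (induction n) auto

lemma pdirs_perm:
  assumes "smooth g" "\<forall>i. count_list js i = count_list ks i"
  shows "pdirs js g = pdirs ks g"
  using assms(2)
proof (induction js arbitrary: ks)
  case Nil
  have "ks = []"
  proof (rule ccontr)
    assume "ks \<noteq> []"
    then obtain k ks' where "ks = k # ks'" by (cases ks) auto
    then show False using Nil[rule_format, of k] by simp
  qed
  then show ?case by simp
next
  case (Cons a js)
  then have "count_list ks a \<noteq> 0" using Cons.prems[rule_format, of a] by simp
  then have "a \<in> set ks" by (simp add: count_list_0_iff)
  then obtain ks1 ks2 where ks: "ks = ks1 @ a # ks2" by (meson split_list)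
  have m: "\<forall>i. count_list js i = count_list (ks1 @ ks2) i"
  proof
    fix i show "count_list js i = count_list (ks1 @ ks2) i"
      using Cons.prems[rule_format, of i] ks by (cases "a = i") simp_all
  qed
  have "pdirs ks g = pdirs ks1 (pdir a (pdirs ks2 g))"
    using ks by (simp add: pdirs_append)
  also have "\<dots> = pdir a (pdirs ks1 (pdirs ks2 g))"
    by (rule pdir_comm_pdirs[OF smooth_pdirs[OF assms(1)]])
  also have "\<dots> = pdir a (pdirs (ks1 @ ks2) g)" by (simp add: pdirs_append)
  also have "\<dots> = pdir a (pdirs js g)" using Cons.IH[OF m] by simp
  finally show ?case by simp
qed

lemma ex_count_list_aux:
  fixes \<beta> :: "'n \<Rightarrow> nat"
  assumes "finite S"
  shows "\<exists>js. \<forall>i. count_list js i = (if i \<in> S then \<beta> i else 0)"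
  using assms
proof (induction S rule: finite_induct)
  case empty then show ?case by (intro exI[of _ "[]"]) simp
next
  case (insert a S)
  then obtain js where js: "\<forall>i. count_list js i = (if i \<in> S then \<beta> i else 0)" by blast
  show ?case
    by (intro exI[of _ "replicate (\<beta> a) a @ js"]) (use js insert.hyps in \<open>auto simp: count_replicate\<close>)
qed

lemma ex_count_list:
  fixes \<beta> :: "'n::finite \<Rightarrow> nat"
  shows "\<exists>js. \<forall>i. count_list js i = \<beta> i"
  using ex_count_list_aux[of UNIV \<beta>] by simp

lemma mpderiv_eq:
  assumes "smooth f" "\<forall>i. count_list js i = \<beta> i"
  shows "mpderiv \<beta> f = pdirs js f"
proof -
  let ?ks = "SOME js. \<forall>i. count_list js i = \<beta> i"
  have k: "\<forall>i. count_list ?ks i = \<beta> i" using someI_ex[OF ex_count_list[of \<beta>]] .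
  have "\<forall>i. count_list ?ks i = count_list js i" using k assms(2) by simp
  then show ?thesis unfolding mpderiv_def by (rule pdirs_perm[OF assms(1)])
qed

lemma pdirs_mpderiv:
  assumes "smooth f"
  shows "pdirs js (mpderiv \<beta> f) = mpderiv (madd \<beta> (count_list js)) f"
proof -
  obtain ks where ks: "\<forall>i. count_list ks i = \<beta> i" using ex_count_list by blast
  have "pdirs js (mpderiv \<beta> f) = pdirs (js @ ks) f"
    using mpderiv_eq[OF assms ks] by (simp add: pdirs_append)
  also have "\<dots> = mpderiv (madd \<beta> (count_list js)) f"
    by (rule mpderiv_eq[OF assms, symmetric]) (simp add: ks madd_def)
  finally show ?thesis .
qed

lemma smooth_mpderiv: "smooth f \<Longrightarrow> smooth (mpderiv \<beta> f)"
  unfolding mpderiv_def by (rule smooth_pdirs)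

lemma ftc1:
  fixes \<phi> \<phi>' :: "real \<Rightarrow> complex"
  assumes D: "\<And>t. (\<phi> has_vector_derivative \<phi>' t) (at t)"
    and C: "continuous_on UNIV \<phi>'"
    and t0: "a \<le> t0" "t0 \<le> b" and ab: "b = a + 1"
  shows "norm (\<phi> t0) \<le> integral {a..b} (\<lambda>t. norm (\<phi> t)) + integral {a..b} (\<lambda>t. norm (\<phi>' t))"
proof -
  have c\<phi>: "continuous_on UNIV \<phi>"
    using D by (meson continuous_at_imp_continuous_on has_vector_derivative_continuous)
  define K where "K = integral {a..b} (\<lambda>t. norm (\<phi>' t))"
  have cn': "continuous_on UNIV (\<lambda>t. norm (\<phi>' t))" using C by (intro continuous_intros)
  have cn: "continuous_on UNIV (\<lambda>t. norm (\<phi> t))" using c\<phi> by (intro continuous_intros)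
  have int': "(\<lambda>t. norm (\<phi>' t)) integrable_on {l..u}" for l u
    by (rule integrable_continuous_interval) (rule continuous_on_subset[OF cn'], simp)
  have intn: "(\<lambda>t. norm (\<phi> t)) integrable_on {l..u}" for l u
    by (rule integrable_continuous_interval) (rule continuous_on_subset[OF cn], simp)
  have intp': "\<phi>' integrable_on {l..u}" for l u
    by (rule integrable_continuous_interval) (rule continuous_on_subset[OF C], simp)
  have seg: "norm (\<phi> u - \<phi> l) \<le> K" if "a \<le> l" "l \<le> u" "u \<le> b" for l u
  proof -
    have "(\<phi>' has_integral (\<phi> u - \<phi> l)) {l..u}"
      by (rule fundamental_theorem_of_calculus[OF \<open>l \<le> u\<close>])
         (auto intro: has_vector_derivative_at_within D)
    then have "\<phi> u - \<phi> l = integral {l..u} \<phi>'" by (simp add: integral_unique)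
    then have "norm (\<phi> u - \<phi> l) \<le> integral {l..u} (\<lambda>t. norm (\<phi>' t))"
      using integral_norm_bound_integral[OF intp' int'] by simp
    also have "\<dots> \<le> K" unfolding K_def
      by (rule integral_subset_le) (use that in \<open>auto intro: int'\<close>)
    finally show ?thesis .
  qed
  have key: "norm (\<phi> t0) \<le> norm (\<phi> s) + K" if s: "s \<in> {a..b}" for s
  proof -
    have "norm (\<phi> t0 - \<phi> s) \<le> K"
    proof (cases "s \<le> t0")
      case True then show ?thesis using seg[of s t0] s t0 by auto
    next
      case False then show ?thesis using seg[of t0 s] s t0 by (auto simp: norm_minus_commute)
    qed
    then show ?thesis using norm_triangle_ineq2[of "\<phi> t0" "\<phi> s"] by linarith
  qed
  have "integral {a..b} (\<lambda>s. norm (\<phi> t0)) \<le> integral {a..b} (\<lambda>s. norm (\<phi> s) + K)"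
    by (rule integral_le) (auto intro: key integrable_add intn)
  also have "integral {a..b} (\<lambda>s. norm (\<phi> s) + K) = integral {a..b} (\<lambda>s. norm (\<phi> s)) + K"
  proof -
    have "((\<lambda>s. norm (\<phi> s) + K) has_integral (integral {a..b} (\<lambda>s. norm (\<phi> s)) + K * (b - a))) {a..b}"
      by (intro has_integral_add integrable_integral intn)
         (use has_integral_const_real[of K a b] t0 in \<open>auto simp: mult.commute\<close>)
    then show ?thesis using ab by (simp add: integral_unique)
  qed
  finally show ?thesis using ab t0 by (simp add: K_def)
qed

lemma sob1:
  fixes g g' :: "real \<Rightarrow> complex"
  assumes D: "\<And>t. (g has_vector_derivative g' t) (at t)"
    and C: "continuous_on UNIV g'" and c: "c \<le> 0" "0 \<le> c + 1"
  shows "ennreal ((norm (g 0))\<^sup>2) \<le>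
    (\<integral>\<^sup>+ t. ennreal (2 * (norm (g t))\<^sup>2 + (norm (g' t))\<^sup>2) * indicator {c..c+1} t \<partial>lborel)"
proof -
  have cg: "continuous_on UNIV g"
    using D by (meson continuous_at_imp_continuous_on has_vector_derivative_continuous)
  have D2: "((\<lambda>t. g t * g t) has_vector_derivative (g t * g' t + g' t * g t)) (at t)" for t
    by (rule has_vector_derivative_mult[OF D D])
  have C2: "continuous_on UNIV (\<lambda>t. g t * g' t + g' t * g t)"
    using cg C by (intro continuous_intros)
  have f: "norm (g 0 * g 0) \<le> integral {c..c+1} (\<lambda>t. norm (g t * g t))
      + integral {c..c+1} (\<lambda>t. norm (g t * g' t + g' t * g t))"
    by (rule ftc1[OF D2 C2]) (use c in auto)
  let ?F = "\<lambda>t. 2 * (norm (g t))\<^sup>2 + (norm (g' t))\<^sup>2"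
  have cF: "continuous_on UNIV ?F" using cg C by (intro continuous_intros)
  have iF: "?F integrable_on {c..c+1}"
    by (rule integrable_continuous_interval) (rule continuous_on_subset[OF cF], simp)
  have i1: "(\<lambda>t. norm (g t * g t)) integrable_on {c..c+1}"
    by (rule integrable_continuous_interval) (intro continuous_intros continuous_on_subset[OF cg], simp_all)
  have i2: "(\<lambda>t. norm (g t * g' t + g' t * g t)) integrable_on {c..c+1}"
    by (rule integrable_continuous_interval) (intro continuous_intros continuous_on_subset[OF cg] continuous_on_subset[OF C], simp_all)
  have pt: "norm (g t * g t) + norm (g t * g' t + g' t * g t) \<le> ?F t" for t
  proof -
    have "norm (g t * g' t + g' t * g t) \<le> 2 * (norm (g t) * norm (g' t))"
      by (metis mult.commute mult_2 norm_mult norm_triangle_ineq)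
    moreover have "2 * (norm (g t) * norm (g' t)) \<le> (norm (g t))\<^sup>2 + (norm (g' t))\<^sup>2"
      using sum_squares_bound[of "norm (g t)" "norm (g' t)"] by (simp add: power2_eq_square)
    ultimately show ?thesis by (simp add: norm_mult power2_eq_square)
  qed
  have "integral {c..c+1} (\<lambda>t. norm (g t * g t)) + integral {c..c+1} (\<lambda>t. norm (g t * g' t + g' t * g t))
      = integral {c..c+1} (\<lambda>t. norm (g t * g t) + norm (g t * g' t + g' t * g t))"
    by (rule integral_add[OF i1 i2, symmetric])
  also have "\<dots> \<le> integral {c..c+1} ?F"
    by (rule integral_le[OF integrable_add[OF i1 i2] iF]) (rule pt)
  finally have le: "(norm (g 0))\<^sup>2 \<le> integral {c..c+1} ?F"
    using f by (simp add: norm_mult power2_eq_square)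
  have "(\<integral>\<^sup>+ t. ennreal (?F t) * indicator {c..c+1} t \<partial>lborel) = ennreal (integral {c..c+1} ?F)"
    by (rule nn_integral_has_integral_lebesgue') (auto intro: integrable_integral iF)
  then show ?thesis using le by (simp add: ennreal_leI)
qed

lemma meas_p:
  fixes x :: "'a::euclidean_space"
  assumes "finite I"
  shows "(\<lambda>z. x + (\<Sum>b\<in>I. z b *\<^sub>R b)) \<in> borel_measurable (Pi\<^sub>M I (\<lambda>_. lborel))"
proof -
  have "(\<lambda>z. z b) \<in> borel_measurable (Pi\<^sub>M I (\<lambda>_. lborel))" if "b \<in> I" for b
    using measurable_component_singleton[OF that, of "\<lambda>_. lborel"] by simp
  then show ?thesis
    by (intro borel_measurable_add borel_measurable_const borel_measurable_sum borel_measurable_scaleR) auto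
qed

lemma meas_F:
  fixes x :: "'a::euclidean_space" and G :: "'a \<Rightarrow> complex"
  assumes "finite I" "continuous_on UNIV G" "\<And>b. b \<in> I \<Longrightarrow> J b \<in> sets lborel"
  shows "(\<lambda>z. indicator (Pi\<^sub>E I J) z * ennreal ((norm (G (x + (\<Sum>b\<in>I. z b *\<^sub>R b))))\<^sup>2))
     \<in> borel_measurable (Pi\<^sub>M I (\<lambda>_. lborel))"
proof -
  have G: "G \<in> borel_measurable borel" using assms(2) by (rule borel_measurable_continuous_onI)
  have "(\<lambda>z. G (x + (\<Sum>b\<in>I. z b *\<^sub>R b))) \<in> borel_measurable (Pi\<^sub>M I (\<lambda>_. lborel))"
    using measurable_compose[OF meas_p[OF assms(1)] G] by (simp add: o_def)
  moreover have "Pi\<^sub>E I J \<in> sets (Pi\<^sub>M I (\<lambda>_. lborel))"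
    using assms(1,3) by (rule sets_PiM_I_finite)
  ultimately show ?thesis by measurable
qed

lemma ind_upd:
  assumes "y \<in> space (Pi\<^sub>M I M)" "b \<notin> I"
  shows "indicator (Pi\<^sub>E (insert b I) J) (y(b := t)) = (indicator (Pi\<^sub>E I J) y * indicator (J b) t :: ennreal)"
  using assms by (auto simp: space_PiM PiE_def extensional_def Pi_def indicator_def split: if_splits)

lemma sum_upd:
  fixes y :: "'a::euclidean_space \<Rightarrow> real"
  assumes "finite I" "b \<notin> I"
  shows "(\<Sum>c\<in>insert b I. (y(b := t)) c *\<^sub>R c) = t *\<^sub>R b + (\<Sum>c\<in>I. y c *\<^sub>R c)"
proof -
  have "(\<Sum>c\<in>I. (y(b := t)) c *\<^sub>R c) = (\<Sum>c\<in>I. y c *\<^sub>R c)"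
    using assms by (intro sum.cong) auto
  then show ?thesis using assms by simp
qed

primrec ddl :: "('a \<Rightarrow> ('a \<Rightarrow> complex) \<Rightarrow> 'a \<Rightarrow> complex) \<Rightarrow> 'a list \<Rightarrow> ('a \<Rightarrow> complex) \<Rightarrow> 'a \<Rightarrow> complex" where
  "ddl dd [] g = g"
| "ddl dd (b # bs) g = dd b (ddl dd bs g)"

definition cubeJ :: "('a \<Rightarrow> real) \<Rightarrow> 'a \<Rightarrow> real set" where
  "cubeJ c b = {c b .. c b + 1}"

definition Aint :: "'a::euclidean_space set \<Rightarrow> ('a \<Rightarrow> real) \<Rightarrow> 'a \<Rightarrow> ('a \<Rightarrow> complex) \<Rightarrow> ennreal" where
  "Aint I c x G = (\<integral>\<^sup>+ z. indicator (Pi\<^sub>E I (cubeJ c)) z * ennreal ((norm (G (x + (\<Sum>b\<in>I. z b *\<^sub>R b))))\<^sup>2) \<partial>Pi\<^sub>M I (\<lambda>_. lborel))"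

lemma ennsplit: "0 \<le> u \<Longrightarrow> 0 \<le> v \<Longrightarrow> ennreal (2 * u + v) = 2 * ennreal u + ennreal v"
  by (simp add: ennreal_plus ennreal_mult)

lemma step_dim:
  fixes G :: "'a::euclidean_space \<Rightarrow> complex" and G' :: "'a \<Rightarrow> complex"
  assumes I: "finite I" "b \<notin> I"
    and cG: "continuous_on UNIV G" and cG': "continuous_on UNIV G'"
    and der: "\<And>y t. ((\<lambda>t. G (y + t *\<^sub>R b)) has_vector_derivative G' (y + t *\<^sub>R b)) (at t)"
    and c: "c b \<le> 0" "0 \<le> c b + 1"
  shows "Aint I c x G \<le> 2 * Aint (insert b I) c x G + Aint (insert b I) c x G'"
proof -
  interpret product_sigma_finite "\<lambda>_::'a. lborel :: real measure" by standard
  let ?p = "\<lambda>y. x + (\<Sum>d\<in>I. y d *\<^sub>R d)"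
  let ?q = "\<lambda>z. x + (\<Sum>d\<in>insert b I. z d *\<^sub>R d)"
  let ?Q = "Pi\<^sub>E I (cubeJ c)" and ?Q' = "Pi\<^sub>E (insert b I) (cubeJ c)"
  have sJ: "\<And>d. cubeJ c d \<in> sets lborel" by (simp add: cubeJ_def)
  have mA: "(\<lambda>z. indicator ?Q' z * ennreal ((norm (H (?q z)))\<^sup>2)) \<in> borel_measurable (Pi\<^sub>M (insert b I) (\<lambda>_. lborel))"
    if "continuous_on UNIV H" for H :: "'a \<Rightarrow> complex"
    using I that sJ by (intro meas_F) auto
  have pt: "indicator ?Q y * ennreal ((norm (G (?p y)))\<^sup>2) \<le>
      (\<integral>\<^sup>+ t. 2 * (indicator ?Q' (y(b := t)) * ennreal ((norm (G (?q (y(b:=t)))))\<^sup>2))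
             + indicator ?Q' (y(b := t)) * ennreal ((norm (G' (?q (y(b:=t)))))\<^sup>2) \<partial>lborel)"
    if y: "y \<in> space (Pi\<^sub>M I (\<lambda>_. lborel))" for y
  proof -
    have d: "((\<lambda>t. G (?p y + t *\<^sub>R b)) has_vector_derivative G' (?p y + t *\<^sub>R b)) (at t)" for t
      by (rule der)
    have cc: "continuous_on UNIV (\<lambda>t. G' (?p y + t *\<^sub>R b))"
      by (rule continuous_on_compose2[OF cG']) (auto intro!: continuous_intros)
    have s: "ennreal ((norm (G (?p y + 0 *\<^sub>R b)))\<^sup>2) \<le>
      (\<integral>\<^sup>+ t. ennreal (2 * (norm (G (?p y + t *\<^sub>R b)))\<^sup>2 + (norm (G' (?p y + t *\<^sub>R b)))\<^sup>2) * indicator {c b..c b+1} t \<partial>lborel)"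
      by (rule sob1[OF d cc c])
    have qe: "?q (y(b:=t)) = ?p y + t *\<^sub>R b" for t
      using sum_upd[OF I, of y t] by (simp add: algebra_simps)
    have "indicator ?Q y * ennreal ((norm (G (?p y)))\<^sup>2) \<le> indicator ?Q y *
      (\<integral>\<^sup>+ t. ennreal (2 * (norm (G (?p y + t *\<^sub>R b)))\<^sup>2 + (norm (G' (?p y + t *\<^sub>R b)))\<^sup>2) * indicator {c b..c b+1} t \<partial>lborel)"
      using s by (intro mult_left_mono) auto
    also have "\<dots> = (\<integral>\<^sup>+ t. indicator ?Q y * (ennreal (2 * (norm (G (?p y + t *\<^sub>R b)))\<^sup>2 + (norm (G' (?p y + t *\<^sub>R b)))\<^sup>2) * indicator {c b..c b+1} t) \<partial>lborel)"
    proof (rule nn_integral_cmult[symmetric])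
      have "continuous_on UNIV (\<lambda>t. 2 * (norm (G (?p y + t *\<^sub>R b)))\<^sup>2 + (norm (G' (?p y + t *\<^sub>R b)))\<^sup>2)"
        by (intro continuous_intros continuous_on_compose2[OF cG] continuous_on_compose2[OF cG']) auto
      then have mF: "(\<lambda>t. 2 * (norm (G (?p y + t *\<^sub>R b)))\<^sup>2 + (norm (G' (?p y + t *\<^sub>R b)))\<^sup>2) \<in> borel_measurable borel"
        by (rule borel_measurable_continuous_onI)
      show "(\<lambda>t. ennreal (2 * (norm (G (?p y + t *\<^sub>R b)))\<^sup>2 + (norm (G' (?p y + t *\<^sub>R b)))\<^sup>2) * indicator {c b..c b+1} t) \<in> borel_measurable lborel"
        using mF by measurable
    qed
    also have "\<dots> = (\<integral>\<^sup>+ t. 2 * (indicator ?Q' (y(b := t)) * ennreal ((norm (G (?q (y(b:=t)))))\<^sup>2))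
             + indicator ?Q' (y(b := t)) * ennreal ((norm (G' (?q (y(b:=t)))))\<^sup>2) \<partial>lborel)"
    proof (rule nn_integral_cong)
      fix t
      have i: "indicator ?Q' (y(b := t)) = (indicator ?Q y * indicator {c b..c b+1} t :: ennreal)"
        using ind_upd[OF y I(2), of "cubeJ c" t] by (simp add: cubeJ_def)
      show "indicator ?Q y * (ennreal (2 * (norm (G (?p y + t *\<^sub>R b)))\<^sup>2 + (norm (G' (?p y + t *\<^sub>R b)))\<^sup>2) * indicator {c b..c b+1} t) =
          2 * (indicator ?Q' (y(b := t)) * ennreal ((norm (G (?q (y(b:=t)))))\<^sup>2))
             + indicator ?Q' (y(b := t)) * ennreal ((norm (G' (?q (y(b:=t)))))\<^sup>2)"
        unfolding i qe by (subst ennsplit) (auto simp: algebra_simps)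
    qed
    finally show ?thesis .
  qed
  have "Aint I c x G \<le> (\<integral>\<^sup>+ y. (\<integral>\<^sup>+ t. 2 * (indicator ?Q' (y(b := t)) * ennreal ((norm (G (?q (y(b:=t)))))\<^sup>2))
             + indicator ?Q' (y(b := t)) * ennreal ((norm (G' (?q (y(b:=t)))))\<^sup>2) \<partial>lborel) \<partial>Pi\<^sub>M I (\<lambda>_. lborel))"
    unfolding Aint_def by (rule nn_integral_mono) (rule pt)
  also have "\<dots> = (\<integral>\<^sup>+ z. 2 * (indicator ?Q' z * ennreal ((norm (G (?q z)))\<^sup>2))
             + indicator ?Q' z * ennreal ((norm (G' (?q z)))\<^sup>2) \<partial>Pi\<^sub>M (insert b I) (\<lambda>_. lborel))"
    by (rule product_nn_integral_insert[OF I, symmetric]) (use mA[OF cG] mA[OF cG'] in measurable)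
  also have "\<dots> = 2 * Aint (insert b I) c x G + Aint (insert b I) c x G'"
    unfolding Aint_def
    by (subst nn_integral_add) (use mA[OF cG] mA[OF cG'] in \<open>auto simp: nn_integral_cmult\<close>)
  finally show ?thesis .
qed

definition SL :: "'a set \<Rightarrow> 'a list set" where
  "SL I = {bs. set bs \<subseteq> I \<and> distinct bs}"

lemma SL_finite: "finite I \<Longrightarrow> finite (SL I)"
  unfolding SL_def by (rule finite_subset_distinct)

lemma aint_empty: "Aint {} c x G = ennreal ((norm (G x))\<^sup>2)"
proof -
  interpret product_sigma_finite "\<lambda>_::'a. lborel :: real measure" by standard
  show ?thesis unfolding Aint_def by (subst nn_integral_empty) (auto simp: indicator_def)
qed

lemma sobolev_main:
  fixes F :: "('a::euclidean_space \<Rightarrow> complex) set" and dd :: "'a \<Rightarrow> ('a \<Rightarrow> complex) \<Rightarrow> 'a \<Rightarrow> complex"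
  assumes closed: "\<And>g b. g \<in> F \<Longrightarrow> b \<in> Basis \<Longrightarrow> dd b g \<in> F"
    and cont: "\<And>g. g \<in> F \<Longrightarrow> continuous_on UNIV g"
    and der: "\<And>g b y t. g \<in> F \<Longrightarrow> b \<in> Basis \<Longrightarrow>
         ((\<lambda>t. g (y + t *\<^sub>R b)) has_vector_derivative dd b g (y + t *\<^sub>R b)) (at t)"
    and c: "\<And>b. c b \<le> 0 \<and> 0 \<le> c b + 1"
    and I: "finite I" "I \<subseteq> Basis" and g: "g \<in> F"
  shows "ennreal ((norm (g x))\<^sup>2) \<le> 2 ^ card I * (\<Sum>bs\<in>SL I. Aint I c x (ddl dd bs g))"
  using I
proof (induction I rule: finite_induct)
  case empty
  have e: "SL {} = {[]}" by (auto simp: SL_def)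
  have "(\<Sum>bs\<in>SL {}. Aint {} c x (ddl dd bs g)) = Aint {} c x g" unfolding e by simp
  then show ?case by (simp add: aint_empty)
next
  case (insert b I)
  let ?I' = "insert b I"
  have inF: "set bs \<subseteq> Basis \<Longrightarrow> ddl dd bs g \<in> F" for bs
    by (induction bs) (auto intro: closed g)
  have bB: "b \<in> Basis" using insert by auto
  have st: "Aint I c x (ddl dd bs g) \<le> 2 * Aint ?I' c x (ddl dd bs g) + Aint ?I' c x (ddl dd (b # bs) g)"
    if "bs \<in> SL I" for bs
  proof -
    have G: "ddl dd bs g \<in> F" using that insert by (intro inF) (auto simp: SL_def)
    show ?thesis unfolding ddl.simps
      by (rule step_dim[OF insert(1,2) cont[OF G] cont[OF closed[OF G bB]] der[OF G bB]]) (use c in auto)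
  qed
  have disj: "SL I \<inter> (Cons b) ` SL I = {}" using insert by (auto simp: SL_def)
  have sub: "SL I \<union> (Cons b) ` SL I \<subseteq> SL ?I'" using insert by (auto simp: SL_def)
  have fin: "finite (SL I)" "finite (SL ?I')" using insert by (auto intro: SL_finite)
  have "ennreal ((norm (g x))\<^sup>2) \<le> 2 ^ card I * (\<Sum>bs\<in>SL I. Aint I c x (ddl dd bs g))"
    using insert by auto
  also have "\<dots> \<le> 2 ^ card I * (\<Sum>bs\<in>SL I. 2 * (Aint ?I' c x (ddl dd bs g) + Aint ?I' c x (ddl dd (b # bs) g)))"
  proof (intro mult_left_mono sum_mono)
    fix bs assume "bs \<in> SL I"
    have le2: "Aint ?I' c x (ddl dd (b # bs) g) \<le> 2 * Aint ?I' c x (ddl dd (b # bs) g)"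
      by (simp add: mult_2 add_increasing)
    then show "Aint I c x (ddl dd bs g) \<le> 2 * (Aint ?I' c x (ddl dd bs g) + Aint ?I' c x (ddl dd (b # bs) g))"
      using st[OF \<open>bs \<in> SL I\<close>] add_left_mono[OF le2, of "2 * Aint ?I' c x (ddl dd bs g)"]
      by (simp add: distrib_left order_trans)
  qed simp
  also have "\<dots> = 2 ^ card ?I' * ((\<Sum>bs\<in>SL I. Aint ?I' c x (ddl dd bs g)) + (\<Sum>bs\<in>SL I. Aint ?I' c x (ddl dd (b # bs) g)))"
  proof -
    have "(\<Sum>bs\<in>SL I. 2 * (Aint ?I' c x (ddl dd bs g) + Aint ?I' c x (ddl dd (b # bs) g)))
       = 2 * ((\<Sum>bs\<in>SL I. Aint ?I' c x (ddl dd bs g)) + (\<Sum>bs\<in>SL I. Aint ?I' c x (ddl dd (b # bs) g)))"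
      by (simp only: sum.distrib[symmetric] sum_distrib_left)
    moreover have "card ?I' = Suc (card I)" using insert by simp
    ultimately show ?thesis by (simp only: power_Suc mult.assoc mult.left_commute)
  qed
  also have "(\<Sum>bs\<in>SL I. Aint ?I' c x (ddl dd (b # bs) g)) = (\<Sum>bs\<in>(Cons b) ` SL I. Aint ?I' c x (ddl dd bs g))"
    by (subst sum.reindex) (auto simp: inj_on_def)
  also have "(\<Sum>bs\<in>SL I. Aint ?I' c x (ddl dd bs g)) + \<dots> = (\<Sum>bs\<in>SL I \<union> (Cons b) ` SL I. Aint ?I' c x (ddl dd bs g))"
    by (rule sum.union_disjoint[symmetric]) (use fin disj in auto)
  also have "\<dots> \<le> (\<Sum>bs\<in>SL ?I'. Aint ?I' c x (ddl dd bs g))"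
    by (rule sum_mono2[OF fin(2) sub]) simp
  finally show ?case by (simp add: mult_left_mono)
qed

lemma PiM_to_lborel:
  fixes f :: "'a::euclidean_space \<Rightarrow> ennreal"
  assumes f: "f \<in> borel_measurable borel"
  shows "(\<integral>\<^sup>+ y. f (x + (\<Sum>b\<in>Basis. y b *\<^sub>R b)) \<partial>Pi\<^sub>M Basis (\<lambda>_. lborel)) = (\<integral>\<^sup>+ z. f z \<partial>lborel)"
proof -
  have T: "(\<lambda>y. \<Sum>b\<in>Basis. y b *\<^sub>R b) \<in> measurable (Pi\<^sub>M Basis (\<lambda>_. lborel)) (borel :: 'a measure)"
    using meas_p[of Basis 0] by simp
  have fx: "(\<lambda>z. f (x + z)) \<in> borel_measurable borel" using f by measurable
  have "(\<integral>\<^sup>+ z. f z \<partial>lborel) = (\<integral>\<^sup>+ z. f z \<partial>distr lborel borel ((+) x))"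
    by (simp add: lborel_distr_plus)
  also have "\<dots> = (\<integral>\<^sup>+ z. f (x + z) \<partial>lborel)"
    by (rule nn_integral_distr) (use f in auto)
  also have "\<dots> = (\<integral>\<^sup>+ z. f (x + z) \<partial>distr (Pi\<^sub>M Basis (\<lambda>_. lborel)) borel (\<lambda>y. \<Sum>b\<in>Basis. y b *\<^sub>R b))"
    by (subst lborel_eq) simp
  also have "\<dots> = (\<integral>\<^sup>+ y. f (x + (\<Sum>b\<in>Basis. y b *\<^sub>R b)) \<partial>Pi\<^sub>M Basis (\<lambda>_. lborel))"
    by (rule nn_integral_distr[OF T]) (use fx in simp)
  finally show ?thesis by simp
qed

lemma aint_to_lborel:
  fixes G H :: "'a::euclidean_space \<Rightarrow> complex"
  assumes cG: "continuous_on UNIV G" and cH: "continuous_on UNIV H" and w: "0 \<le> w"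
    and le: "\<And>y. y \<in> Pi\<^sub>E Basis (cubeJ c) \<Longrightarrow>
       w * (norm (G (x + (\<Sum>b\<in>Basis. y b *\<^sub>R b))))\<^sup>2 \<le> (norm (H (x + (\<Sum>b\<in>Basis. y b *\<^sub>R b))))\<^sup>2"
  shows "ennreal w * Aint Basis c x G \<le> (\<integral>\<^sup>+ z. ennreal ((norm (H z))\<^sup>2) \<partial>lborel)"
proof -
  have sJ: "\<And>d. cubeJ c d \<in> sets lborel" by (simp add: cubeJ_def)
  have m: "(\<lambda>z. indicator (Pi\<^sub>E Basis (cubeJ c)) z * ennreal ((norm (G (x + (\<Sum>b\<in>Basis. z b *\<^sub>R b))))\<^sup>2))
     \<in> borel_measurable (Pi\<^sub>M Basis (\<lambda>_. lborel))"
    by (rule meas_F[OF _ cG]) (auto simp: cubeJ_def)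
  have mH: "(\<lambda>z. ennreal ((norm (H z))\<^sup>2)) \<in> borel_measurable borel"
    using borel_measurable_continuous_onI[OF cH] by measurable
  have "ennreal w * Aint Basis c x G = (\<integral>\<^sup>+ y. ennreal w * (indicator (Pi\<^sub>E Basis (cubeJ c)) y * ennreal ((norm (G (x + (\<Sum>b\<in>Basis. y b *\<^sub>R b))))\<^sup>2)) \<partial>Pi\<^sub>M Basis (\<lambda>_. lborel))"
    unfolding Aint_def by (rule nn_integral_cmult[symmetric, OF m])
  also have "\<dots> \<le> (\<integral>\<^sup>+ y. ennreal ((norm (H (x + (\<Sum>b\<in>Basis. y b *\<^sub>R b))))\<^sup>2) \<partial>Pi\<^sub>M Basis (\<lambda>_. lborel))"
  proof (rule nn_integral_mono)
    fix y
    show "ennreal w * (indicator (Pi\<^sub>E Basis (cubeJ c)) y * ennreal ((norm (G (x + (\<Sum>b\<in>Basis. y b *\<^sub>R b))))\<^sup>2))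
        \<le> ennreal ((norm (H (x + (\<Sum>b\<in>Basis. y b *\<^sub>R b))))\<^sup>2)"
    proof (cases "y \<in> Pi\<^sub>E Basis (cubeJ c)")
      case True
      then show ?thesis using le[OF True] w by (simp add: ennreal_mult[symmetric] ennreal_leI)
    qed simp
  qed
  also have "\<dots> = (\<integral>\<^sup>+ z. ennreal ((norm (H z))\<^sup>2) \<partial>lborel)"
    by (rule PiM_to_lborel[OF mH])
  finally show ?thesis .
qed

lemma card_Basis_vec: "card (Basis :: (real^'n) set) = CARD('n)"
  using DIM_cart[where 'a=real and 'b='n] by simp

lemma ddl_pdirs: "ddl (\<lambda>b. pdir (axis_index b)) bs g = pdirs (map axis_index bs) g"
  by (induction bs) auto

lemma sum_axis_comp:
  fixes y :: "real^'n \<Rightarrow> real"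
  shows "(\<Sum>b\<in>Basis. y b *\<^sub>R b) $ i = y (axis i 1)"
proof -
  have "(\<Sum>b\<in>Basis. y b *\<^sub>R b) $ i = (\<Sum>b\<in>Basis. y b *\<^sub>R b) \<bullet> axis i 1"
    by (rule cart_eq_inner_axis)
  also have "\<dots> = (\<Sum>b\<in>Basis. y b * (b \<bullet> axis i 1))"
    by (simp add: inner_sum_left)
  also have "\<dots> = (\<Sum>b\<in>Basis. if b = axis i 1 then y b else 0)"
    by (intro sum.cong refl) (simp add: inner_Basis)
  also have "\<dots> = y (axis i 1)" by (simp add: sum.delta')
  finally show ?thesis .
qed

lemma abs_monom_le:
  assumes "\<And>i. \<bar>x $ i\<bar> \<le> \<bar>p $ i\<bar>"
  shows "\<bar>monom_mi \<alpha> x\<bar> \<le> \<bar>monom_mi \<alpha> p\<bar>"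
  unfolding monom_mi_def abs_prod
  by (intro prod_mono) (auto simp: power_abs intro: power_mono assms)

lemma sob_vec:
  fixes f :: "real^'n \<Rightarrow> complex"
  assumes f: "smooth f"
  shows "ennreal ((norm (complex_of_real (monom_mi \<alpha> x) * mpderiv \<beta> f x))\<^sup>2) \<le>
    2 ^ CARD('n) * (\<Sum>bs\<in>SL (Basis :: (real^'n) set).
      (\<integral>\<^sup>+ z. ennreal ((norm (complex_of_real (monom_mi \<alpha> z) * mpderiv (madd \<beta> (count_list (map axis_index bs))) f z))\<^sup>2) \<partial>lborel))"
proof -
  let ?F = "{g. \<exists>js. g = pdirs js f}"
  let ?dd = "\<lambda>b::real^'n. pdir (axis_index b)"
  define c where "c = (\<lambda>b::real^'n. if 0 \<le> x \<bullet> b then 0 else - 1 :: real)"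
  have closed: "\<And>g b. g \<in> ?F \<Longrightarrow> b \<in> Basis \<Longrightarrow> ?dd b g \<in> ?F"
    by (auto intro: exI[of _ "_ # _"])
  have cont: "\<And>g. g \<in> ?F \<Longrightarrow> continuous_on UNIV g"
    using smooth_cont[OF smooth_pdirs[OF f]] by auto
  have der: "((\<lambda>t. g (y + t *\<^sub>R b)) has_vector_derivative ?dd b g (y + t *\<^sub>R b)) (at t)"
    if gF: "g \<in> ?F" and bB: "b \<in> Basis" for g b y t
  proof -
    obtain js where g: "g = pdirs js f" using gF by auto
    obtain j where bj: "b = axis j 1" using axis_inverse[OF bB] by blast
    show ?thesis
      using line_deriv[OF smooth_pdirs[OF f, of js], of y j t] unfolding bj g by simp
  qed
  have cc: "\<And>b. c b \<le> 0 \<and> 0 \<le> c b + 1" by (simp add: c_def)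
  let ?g0 = "mpderiv \<beta> f"
  have g0: "?g0 \<in> ?F" unfolding mpderiv_def by auto
  have S: "ennreal ((norm (?g0 x))\<^sup>2) \<le> 2 ^ CARD('n) * (\<Sum>bs\<in>SL Basis. Aint Basis c x (ddl ?dd bs ?g0))"
    using sobolev_main[OF closed cont der cc _ _ g0, of Basis x] by (simp add: card_Basis_vec)
  let ?w = "(monom_mi \<alpha> x)\<^sup>2"
  have dd_eq: "ddl ?dd bs ?g0 = mpderiv (madd \<beta> (count_list (map axis_index bs))) f" for bs
    by (simp add: ddl_pdirs pdirs_mpderiv[OF f])
  have each: "ennreal ?w * Aint Basis c x (ddl ?dd bs ?g0) \<le>
     (\<integral>\<^sup>+ z. ennreal ((norm (complex_of_real (monom_mi \<alpha> z) * mpderiv (madd \<beta> (count_list (map axis_index bs))) f z))\<^sup>2) \<partial>lborel)"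
    for bs
  proof -
    let ?G = "mpderiv (madd \<beta> (count_list (map axis_index bs))) f"
    have cG: "continuous_on UNIV ?G" by (rule smooth_cont[OF smooth_mpderiv[OF f]])
    have cm: "continuous_on UNIV (\<lambda>z::real^'n. monom_mi \<alpha> z)"
      unfolding monom_mi_def by (intro continuous_intros)
    have cH: "continuous_on UNIV (\<lambda>z. complex_of_real (monom_mi \<alpha> z) * ?G z)"
      by (intro continuous_intros cG continuous_on_compose2[OF continuous_on_of_real cm]) auto
    show ?thesis unfolding dd_eq
    proof (rule aint_to_lborel[OF cG cH])
      fix y assume y: "y \<in> Pi\<^sub>E Basis (cubeJ c)"
      let ?p = "x + (\<Sum>b\<in>Basis. y b *\<^sub>R b)"
      have "\<bar>x $ i\<bar> \<le> \<bar>?p $ i\<bar>" for i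
      proof -
        have yi: "y (axis i 1) \<in> cubeJ c (axis i 1)" using y by (auto simp: PiE_def Pi_def)
        have "?p $ i = x $ i + y (axis i 1)" using sum_axis_comp[of y i] by simp
        moreover have "x \<bullet> axis i 1 = x $ i" by (simp add: inner_axis)
        ultimately show ?thesis using yi by (auto simp: cubeJ_def c_def split: if_splits)
      qed
      then have am: "\<bar>monom_mi \<alpha> x\<bar> \<le> \<bar>monom_mi \<alpha> ?p\<bar>" by (rule abs_monom_le)
      then have "?w \<le> (monom_mi \<alpha> ?p)\<^sup>2"
        using power_mono[OF am abs_ge_zero, of 2] by simp
      then show "?w * (norm (?G ?p))\<^sup>2 \<le> (norm (complex_of_real (monom_mi \<alpha> ?p) * ?G ?p))\<^sup>2"
        by (simp add: norm_mult power_mult_distrib mult_right_mono)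
    qed simp
  qed
  have "ennreal ((norm (complex_of_real (monom_mi \<alpha> x) * ?g0 x))\<^sup>2) = ennreal ?w * ennreal ((norm (?g0 x))\<^sup>2)"
    by (simp add: norm_mult power_mult_distrib ennreal_mult)
  also have "\<dots> \<le> ennreal ?w * (2 ^ CARD('n) * (\<Sum>bs\<in>SL Basis. Aint Basis c x (ddl ?dd bs ?g0)))"
    by (rule mult_left_mono[OF S]) simp
  also have "\<dots> = 2 ^ CARD('n) * (\<Sum>bs\<in>SL Basis. ennreal ?w * Aint Basis c x (ddl ?dd bs ?g0))"
    by (simp add: sum_distrib_left mult.left_commute)
  also have "\<dots> \<le> 2 ^ CARD('n) * (\<Sum>bs\<in>SL (Basis :: (real^'n) set).
      (\<integral>\<^sup>+ z. ennreal ((norm (complex_of_real (monom_mi \<alpha> z) * mpderiv (madd \<beta> (count_list (map axis_index bs))) f z))\<^sup>2) \<partial>lborel))"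
    by (intro mult_left_mono sum_mono each) simp
  finally show ?thesis .
qed

lemma mabs_madd: "mabs (madd a b) = mabs a + mabs b"
  by (simp add: mabs_def madd_def sum.distrib)

lemma madd_assoc: "madd a (madd b c) = madd (madd a b) c"
  by (simp add: madd_def add.assoc)

lemma mabs_count: "mabs (count_list (js :: 'n::finite list)) = length js"
  unfolding mabs_def by (rule sum_count_set) auto

lemma SL_len:
  assumes "bs \<in> SL (Basis :: (real^'n) set)"
  shows "mabs (count_list (map axis_index bs)) \<le> CARD('n)"
proof -
  have "length bs = card (set bs)" using assms by (simp add: SL_def distinct_card)
  also have "\<dots> \<le> card (Basis :: (real^'n) set)" using assms by (intro card_mono) (auto simp: SL_def)
  finally show ?thesis by (simp add: mabs_count card_Basis_vec)
qed

lemma SL_card_pos: "0 < card (SL (Basis :: (real^'n) set))"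
proof -
  have "[] \<in> SL (Basis :: (real^'n) set)" by (simp add: SL_def)
  then show ?thesis using SL_finite[of "Basis :: (real^'n) set"] by (auto simp: card_gt_0_iff)
qed

lemma L2_le:
  assumes "L2_norm g \<le> ennreal r" "0 \<le> r"
  shows "(\<integral>\<^sup>+ x. ennreal ((norm (g x))\<^sup>2) \<partial>lborel) \<le> ennreal (r\<^sup>2)"
proof -
  let ?s = "(\<integral>\<^sup>+ x. ennreal ((norm (g x))\<^sup>2) \<partial>lborel)"
  have ns: "?s \<noteq> \<infinity>"
  proof
    assume "?s = \<infinity>"
    then have "L2_norm g = \<infinity>" unfolding L2_norm_def by (simp add: Let_def)
    then show False using assms(1) by (simp add: top_unique)
  qed
  then have L: "L2_norm g = ennreal (sqrt (enn2real ?s))" unfolding L2_norm_def by (simp add: Let_def)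
  have "sqrt (enn2real ?s) \<le> r" using assms L by (simp add: ennreal_le_iff)
  then have "(sqrt (enn2real ?s))\<^sup>2 \<le> r\<^sup>2" by (intro power_mono) auto
  then have "enn2real ?s \<le> r\<^sup>2" by simp
  then have "ennreal (enn2real ?s) \<le> ennreal (r\<^sup>2)" by (rule ennreal_leI)
  moreover have "?s = ennreal (enn2real ?s)" using ns by (simp add: ennreal_enn2real_if)
  ultimately show ?thesis by simp
qed

lemma L2_le':
  assumes "(\<integral>\<^sup>+ x. ennreal ((norm (g x))\<^sup>2) \<partial>lborel) \<le> ennreal (r\<^sup>2)" "0 \<le> r"
  shows "L2_norm g \<le> ennreal r"
proof -
  let ?s = "(\<integral>\<^sup>+ x. ennreal ((norm (g x))\<^sup>2) \<partial>lborel)"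
  have ns: "?s \<noteq> \<infinity>"
  proof
    assume "?s = \<infinity>" then show False using assms(1) by (simp add: top_unique)
  qed
  then have L: "L2_norm g = ennreal (sqrt (enn2real ?s))" unfolding L2_norm_def by (simp add: Let_def)
  have "enn2real ?s \<le> enn2real (ennreal (r\<^sup>2))" using assms(1) by (intro enn2real_mono) auto
  then have "enn2real ?s \<le> r\<^sup>2" by simp
  then have "sqrt (enn2real ?s) \<le> sqrt (r\<^sup>2)" by (rule real_sqrt_le_mono)
  then have "sqrt (enn2real ?s) \<le> r" using assms(2) by simp
  then show ?thesis using L by (simp add: ennreal_leI)
qed

lemma enn_div_le:
  assumes "0 < D" "X * ennreal (1 / D) \<le> Y"
  shows "X \<le> Y * ennreal D"
proof -
  have "X = X * ennreal (1 / D) * ennreal D"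
    using assms(1) by (simp add: mult.assoc ennreal_mult[symmetric])
  also have "\<dots> \<le> Y * ennreal D" by (rule mult_right_mono[OF assms(2)]) simp
  finally show ?thesis .
qed

lemma le_enn_div:
  assumes "0 < D" "X \<le> ennreal (a * D)" "0 \<le> a"
  shows "X * ennreal (1 / D) \<le> ennreal a"
proof -
  have "X * ennreal (1 / D) \<le> ennreal (a * D) * ennreal (1 / D)" by (rule mult_right_mono[OF assms(2)]) simp
  also have "\<dots> = ennreal a" using assms by (simp add: ennreal_mult[symmetric])
  finally show ?thesis .
qed

lemma sup_norm_le: "(\<And>x. norm (g x) \<le> K) \<Longrightarrow> sup_norm g \<le> ennreal K"
  unfolding sup_norm_def by (rule SUP_least) (simp add: ennreal_leI)

lemma le_sup_norm: "ennreal (norm (g x)) \<le> sup_norm g"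
  unfolding sup_norm_def by (rule SUP_upper) simp

lemma SUP2_upper: "T a b \<le> (SUP a. SUP b. T a b :: ennreal)"
  by (rule order_trans[OF SUP_upper[where i=b and f="T a", OF UNIV_I] SUP_upper[where i=a and f="\<lambda>a. SUP b. T a b", OF UNIV_I]])

lemma wnorm_2_term:
  assumes "wnorm_2 M h f \<le> ennreal n" "0 < h" "0 < M (madd \<alpha> \<beta>)" "0 \<le> n"
  shows "L2_norm (\<lambda>x. complex_of_real (monom_mi \<alpha> x) * mpderiv \<beta> f x) \<le> ennreal (n * (h ^ mabs (madd \<alpha> \<beta>) * M (madd \<alpha> \<beta>)))"
proof -
  define T where "T a b = L2_norm (\<lambda>x. complex_of_real (monom_mi a x) * mpderiv b f x) * ennreal (1 / (h ^ mabs (madd a b) * M (madd a b)))" for a b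
  have w: "wnorm_2 M h f = (SUP a. SUP b. T a b)" unfolding wnorm_2_def T_def ..
  have D: "0 < h ^ mabs (madd \<alpha> \<beta>) * M (madd \<alpha> \<beta>)" using assms by simp
  have "T \<alpha> \<beta> \<le> ennreal n" using SUP2_upper[of T \<alpha> \<beta>] assms(1) unfolding w by (rule order_trans)
  then have "L2_norm (\<lambda>x. complex_of_real (monom_mi \<alpha> x) * mpderiv \<beta> f x) \<le> ennreal n * ennreal (h ^ mabs (madd \<alpha> \<beta>) * M (madd \<alpha> \<beta>))"
    unfolding T_def by (rule enn_div_le[OF D])
  also have "\<dots> = ennreal (n * (h ^ mabs (madd \<alpha> \<beta>) * M (madd \<alpha> \<beta>)))"
    using D assms(4) by (simp add: ennreal_mult)
  finally show ?thesis .
qed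

lemma wnorm_inf_term:
  assumes "wnorm_inf M h f \<le> ennreal n" "0 < h" "0 < M (madd \<alpha> \<beta>)" "0 \<le> n"
  shows "sup_norm (\<lambda>x. complex_of_real (monom_mi \<alpha> x) * mpderiv \<beta> f x) \<le> ennreal (n * (h ^ mabs (madd \<alpha> \<beta>) * M (madd \<alpha> \<beta>)))"
proof -
  define T where "T a b = sup_norm (\<lambda>x. complex_of_real (monom_mi a x) * mpderiv b f x) * ennreal (1 / (h ^ mabs (madd a b) * M (madd a b)))" for a b
  have w: "wnorm_inf M h f = (SUP a. SUP b. T a b)" unfolding wnorm_inf_def T_def ..
  have D: "0 < h ^ mabs (madd \<alpha> \<beta>) * M (madd \<alpha> \<beta>)" using assms by simp
  have "T \<alpha> \<beta> \<le> ennreal n" using SUP2_upper[of T \<alpha> \<beta>] assms(1) unfolding w by (rule order_trans)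
  then have "sup_norm (\<lambda>x. complex_of_real (monom_mi \<alpha> x) * mpderiv \<beta> f x) \<le> ennreal n * ennreal (h ^ mabs (madd \<alpha> \<beta>) * M (madd \<alpha> \<beta>))"
    unfolding T_def by (rule enn_div_le[OF D])
  also have "\<dots> = ennreal (n * (h ^ mabs (madd \<alpha> \<beta>) * M (madd \<alpha> \<beta>)))"
    using D assms(4) by (simp add: ennreal_mult)
  finally show ?thesis .
qed

lemma sup_le_L2:
  fixes f :: "real^'n \<Rightarrow> complex" and Ms Mt :: "('n \<Rightarrow> nat) \<Rightarrow> real"
  assumes f: "smooth f" and Ms: "\<And>\<delta>. 0 < Ms \<delta>" and Mt: "\<And>\<delta>. 0 < Mt \<delta>"
    and hs: "0 < hs" and ht: "0 < ht" and C: "0 < C"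
    and bnd: "\<And>\<gamma> c. mabs c \<le> CARD('n) \<Longrightarrow>
        hs ^ mabs (madd \<gamma> c) * Ms (madd \<gamma> c) \<le> C * (ht ^ mabs \<gamma> * Mt \<gamma>)"
  shows "wnorm_inf Mt ht f \<le> ennreal (C * sqrt (2 ^ CARD('n) * real (card (SL (Basis :: (real^'n) set))))) * wnorm_2 Ms hs f"
proof -
  let ?S = "SL (Basis :: (real^'n) set)"
  define Q where "Q = sqrt (2 ^ CARD('n) * real (card ?S))"
  have Q: "0 < Q" unfolding Q_def using SL_card_pos[where 'n='n] by simp
  show ?thesis
  proof (cases "wnorm_2 Ms hs f = top")
    case True
    have "ennreal (C * Q) \<noteq> 0" using C Q by simp
    then show ?thesis using True by (simp add: Q_def[symmetric] ennreal_mult_top)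
  next
    case False
    then obtain n where n: "wnorm_2 Ms hs f = ennreal n" "0 \<le> n"
      by (metis ennreal_cases)
    have "wnorm_inf Mt ht f \<le> ennreal (C * Q) * ennreal n"
      unfolding wnorm_inf_def
    proof (intro SUP_least)
      fix \<alpha> \<beta> :: "'n \<Rightarrow> nat"
      let ?\<gamma> = "madd \<alpha> \<beta>"
      define E where "E = n * C * (ht ^ mabs ?\<gamma> * Mt ?\<gamma>)"
      have E: "0 \<le> E" unfolding E_def using n C ht Mt[of ?\<gamma>] by simp
      have int: "(\<integral>\<^sup>+ z. ennreal ((norm (complex_of_real (monom_mi \<alpha> z) * mpderiv (madd \<beta> (count_list (map axis_index bs))) f z))\<^sup>2) \<partial>lborel)
          \<le> ennreal (E\<^sup>2)" if bs: "bs \<in> ?S" for bs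
      proof -
        let ?c = "count_list (map axis_index bs)"
        have "L2_norm (\<lambda>z. complex_of_real (monom_mi \<alpha> z) * mpderiv (madd \<beta> ?c) f z)
           \<le> ennreal (n * (hs ^ mabs (madd \<alpha> (madd \<beta> ?c)) * Ms (madd \<alpha> (madd \<beta> ?c))))"
          by (rule wnorm_2_term) (use n hs Ms in auto)
        also have "\<dots> \<le> ennreal E"
        proof (rule ennreal_leI)
          have "hs ^ mabs (madd ?\<gamma> ?c) * Ms (madd ?\<gamma> ?c) \<le> C * (ht ^ mabs ?\<gamma> * Mt ?\<gamma>)"
            by (rule bnd[OF SL_len[OF bs]])
          then show "n * (hs ^ mabs (madd \<alpha> (madd \<beta> ?c)) * Ms (madd \<alpha> (madd \<beta> ?c))) \<le> E"
            unfolding E_def madd_assoc using n(2) by (simp add: mult.assoc mult_left_mono)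
        qed
        finally show ?thesis by (rule L2_le[OF _ E])
      qed
      have pt: "norm (complex_of_real (monom_mi \<alpha> x) * mpderiv \<beta> f x) \<le> Q * E" for x
      proof -
        have "ennreal ((norm (complex_of_real (monom_mi \<alpha> x) * mpderiv \<beta> f x))\<^sup>2) \<le>
          2 ^ CARD('n) * (\<Sum>bs\<in>?S. ennreal (E\<^sup>2))"
          using sob_vec[OF f, of \<alpha> x \<beta>] by (rule order_trans) (intro mult_left_mono sum_mono int, auto)
        also have "\<dots> = ennreal (Q\<^sup>2 * E\<^sup>2)"
          unfolding Q_def by (simp add: ennreal_mult ennreal_power[symmetric] ennreal_of_nat_eq_real_of_nat mult.assoc)
        finally have "(norm (complex_of_real (monom_mi \<alpha> x) * mpderiv \<beta> f x))\<^sup>2 \<le> (Q * E)\<^sup>2"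
          using Q E by (simp add: ennreal_le_iff power_mult_distrib)
        then show ?thesis using Q E by (meson mult_nonneg_nonneg order.strict_implies_order power2_le_imp_le)
      qed
      have "sup_norm (\<lambda>x. complex_of_real (monom_mi \<alpha> x) * mpderiv \<beta> f x) \<le> ennreal (Q * E)"
        by (rule sup_norm_le) (rule pt)
      also have "\<dots> = ennreal ((C * Q * n) * (ht ^ mabs ?\<gamma> * Mt ?\<gamma>))" unfolding E_def by (simp add: ac_simps)
      finally have sn: "sup_norm (\<lambda>x. complex_of_real (monom_mi \<alpha> x) * mpderiv \<beta> f x) \<le> ennreal ((C * Q * n) * (ht ^ mabs ?\<gamma> * Mt ?\<gamma>))" .
      have "sup_norm (\<lambda>x. complex_of_real (monom_mi \<alpha> x) * mpderiv \<beta> f x) * ennreal (1 / (ht ^ mabs ?\<gamma> * Mt ?\<gamma>))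
          \<le> ennreal (C * Q * n)"
        by (rule le_enn_div[OF _ sn]) (use ht Mt[of ?\<gamma>] C Q n in auto)
      also have "\<dots> = ennreal (C * Q) * ennreal n" using C Q n by (simp add: ennreal_mult)
      finally show "sup_norm (\<lambda>x. complex_of_real (monom_mi \<alpha> x) * mpderiv \<beta> f x) * ennreal (1 / (ht ^ mabs ?\<gamma> * Mt ?\<gamma>))
          \<le> ennreal (C * Q) * ennreal n" .
    qed
    then show ?thesis using n by (simp add: Q_def)
  qed
qed

lemma nn_reflect:
  fixes F :: "real \<Rightarrow> ennreal"
  assumes "F \<in> borel_measurable borel"
  shows "(\<integral>\<^sup>+ t. F (- t) \<partial>lborel) = (\<integral>\<^sup>+ t. F t \<partial>lborel)"
proof -
  have "(\<integral>\<^sup>+ t. F t \<partial>lborel) = (\<integral>\<^sup>+ t. F t \<partial>distr lborel borel uminus)"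
    by (simp add: lborel_distr_uminus)
  also have "\<dots> = (\<integral>\<^sup>+ t. F (- t) \<partial>lborel)"
    by (rule nn_integral_distr) (use assms in auto)
  finally show ?thesis by simp
qed

lemma tail_int: "(\<integral>\<^sup>+ t. ennreal (1 / t\<^sup>2) * indicator {1..} t \<partial>lborel) = 1"
proof -
  have "((\<lambda>x::real. 1 / x ^ 2) has_integral 1 / (real (2 - 1) * 1 ^ (2 - 1))) {1..}"
    by (rule has_integral_inverse_power_to_inf) auto
  then have "((\<lambda>x::real. 1 / x\<^sup>2) has_integral 1) {1..}" by simp
  then show ?thesis by (subst nn_integral_has_integral_lebesgue') auto
qed

lemma psi_int: "(\<integral>\<^sup>+ t. ennreal (1 / max 1 (t\<^sup>2)) \<partial>lborel) \<le> 4"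
proof -
  let ?a = "\<lambda>t::real. indicator {-1..1} t :: ennreal"
  let ?b = "\<lambda>t::real. ennreal (1 / t\<^sup>2) * indicator {1..} t"
  let ?c = "\<lambda>t::real. ennreal (1 / (- t)\<^sup>2) * indicator {1..} (- t)"
  have mb: "?b \<in> borel_measurable borel" by measurable
  have mc: "?c \<in> borel_measurable borel" by measurable
  have pt: "ennreal (1 / max 1 (t\<^sup>2)) \<le> ?a t + ?b t + ?c t" for t
  proof (cases "\<bar>t\<bar> \<le> 1")
    case True
    then have "t \<in> {-1..1}" by auto
    then have "?a t = 1" by simp
    moreover have "1 / max 1 (t\<^sup>2) \<le> 1" by (simp add: field_simps)
    ultimately show ?thesis by (simp add: ennreal_leI add_increasing2 order_trans[OF ennreal_leI[of _ 1]])
  next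
    case False
    then have m: "max 1 (t\<^sup>2) = t\<^sup>2"
      by (metis abs_le_square_iff abs_one linorder_le_cases max.absorb2 max.orderE one_power2)
    show ?thesis
    proof (cases "t \<ge> 1")
      case True then show ?thesis using m by (simp add: add_increasing)
    next
      case False then have "- t \<ge> 1" using \<open>\<not> \<bar>t\<bar> \<le> 1\<close> by auto
      then show ?thesis using m by (simp add: add_increasing2)
    qed
  qed
  have "(\<integral>\<^sup>+ t. ennreal (1 / max 1 (t\<^sup>2)) \<partial>lborel) \<le> (\<integral>\<^sup>+ t. ?a t + ?b t + ?c t \<partial>lborel)"
    by (rule nn_integral_mono) (rule pt)
  also have "\<dots> = (\<integral>\<^sup>+ t. ?a t \<partial>lborel) + (\<integral>\<^sup>+ t. ?b t \<partial>lborel) + (\<integral>\<^sup>+ t. ?c t \<partial>lborel)"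
    using mb mc by (simp add: nn_integral_add)
  also have "(\<integral>\<^sup>+ t. ?c t \<partial>lborel) = (\<integral>\<^sup>+ t. ?b t \<partial>lborel)"
    using nn_reflect[OF mb] by simp
  also have "(\<integral>\<^sup>+ t. ?a t \<partial>lborel) = 2" by simp
  finally show ?thesis by (simp add: tail_int)
qed

lemma Basis_vec_range: "(Basis :: (real^'n) set) = range (\<lambda>i. axis i 1)"
  by (auto simp: Basis_vec_def)

lemma prod_Basis_vec:
  fixes g :: "real \<Rightarrow> 'b::comm_monoid_mult"
  shows "(\<Prod>b\<in>(Basis :: (real^'n) set). g (x \<bullet> b)) = (\<Prod>i\<in>UNIV. g (x $ i))"
proof -
  have inj: "inj (\<lambda>i::'n. axis i (1::real))" by (auto simp: inj_def axis_eq_axis)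
  show ?thesis unfolding Basis_vec_range by (subst prod.reindex[OF inj]) (simp add: inner_axis)
qed

lemma prod_psi_int:
  "(\<integral>\<^sup>+ x. ennreal (\<Prod>i\<in>UNIV. 1 / max 1 ((x $ i)\<^sup>2)) \<partial>(lborel :: (real^'n) measure)) \<le> 4 ^ CARD('n)"
proof -
  let ?f = "\<lambda>(b::real^'n) (t::real). ennreal (1 / max 1 (t\<^sup>2))"
  have "(\<integral>\<^sup>+ x. ennreal (\<Prod>i\<in>UNIV. 1 / max 1 ((x $ i)\<^sup>2)) \<partial>(lborel :: (real^'n) measure))
      = (\<integral>\<^sup>+ x. (\<Prod>b\<in>Basis. ?f b (x \<bullet> b)) \<partial>(lborel :: (real^'n) measure))"
  proof -
    have "(\<Prod>b\<in>(Basis :: (real^'n) set). 1 / max 1 ((x \<bullet> b)\<^sup>2)) = (\<Prod>i\<in>UNIV. 1 / max 1 ((x $ i)\<^sup>2))" for x :: "real^'n"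
      by (rule prod_Basis_vec)
    then show ?thesis by (simp add: prod_ennreal)
  qed
  also have "\<dots> = (\<Prod>b\<in>(Basis :: (real^'n) set). (\<integral>\<^sup>+ t. ?f b t \<partial>lborel))"
    by (rule nn_integral_lborel_prod) auto
  also have "\<dots> \<le> (\<Prod>b\<in>(Basis :: (real^'n) set). 4)"
    by (simp add: power_mono psi_int)
  also have "\<dots> = 4 ^ CARD('n)" by (simp add: card_Basis_vec)
  finally show ?thesis .
qed

definition ex2 :: "real^'n \<Rightarrow> 'n \<Rightarrow> nat" where
  "ex2 x = (\<lambda>i. if 1 < \<bar>x $ i\<bar> then 2 else 0)"

lemma mabs_ex2: "mabs (ex2 (x :: real^'n::finite)) \<le> 2 * CARD('n)"
proof -
  have "mabs (ex2 x) \<le> (\<Sum>i\<in>(UNIV::'n set). 2)" unfolding mabs_def ex2_def by (intro sum_mono) auto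
  then show ?thesis by simp
qed

lemma monom_ex2: "monom_mi (madd \<alpha> (ex2 x)) x = monom_mi \<alpha> x * (\<Prod>i\<in>UNIV. max 1 ((x $ i)\<^sup>2))"
proof -
  have e: "(x $ i) ^ ex2 x i = max 1 ((x $ i)\<^sup>2)" for i
  proof (cases "1 < \<bar>x $ i\<bar>")
    case True
    have "1 < \<bar>x $ i\<bar> * \<bar>x $ i\<bar>" by (rule less_1_mult[OF True True])
    then have "1 < (x $ i)\<^sup>2" by (simp add: power2_eq_square)
    then show ?thesis using True by (simp add: ex2_def)
  next
    case False
    have "\<bar>x $ i\<bar> * \<bar>x $ i\<bar> \<le> 1 * 1" using False by (intro mult_mono) auto
    then have "(x $ i)\<^sup>2 \<le> 1" by (simp add: power2_eq_square)
    then show ?thesis using False by (simp add: ex2_def)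
  qed
  show ?thesis unfolding monom_mi_def madd_def by (simp add: power_add prod.distrib e)
qed

lemma madd_comm3: "madd (madd a e) b = madd (madd a b) e"
  by (simp add: madd_def ac_simps)

lemma real_aux:
  fixes g W K :: real
  assumes "g * W \<le> K" "1 \<le> W" "0 \<le> g"
  shows "g\<^sup>2 \<le> K\<^sup>2 * (1 / W)"
proof -
  have "g \<le> K / W" using assms by (simp add: pos_le_divide_eq)
  then have "g\<^sup>2 \<le> (K / W)\<^sup>2" using assms(3) by (rule power_mono)
  also have "\<dots> = K\<^sup>2 / (W * W)" by (simp add: power_divide power2_eq_square)
  also have "\<dots> \<le> K\<^sup>2 / W"
  proof (rule divide_left_mono)
    show "W \<le> W * W" using assms(2) by simp
    show "0 < W * W * W" using assms(2) by simp
  qed simp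
  finally show ?thesis by simp
qed

lemma L2_le_sup:
  fixes f :: "real^'n \<Rightarrow> complex" and Ms Mt :: "('n \<Rightarrow> nat) \<Rightarrow> real"
  assumes f: "smooth f" and Ms: "\<And>\<delta>. 0 < Ms \<delta>" and Mt: "\<And>\<delta>. 0 < Mt \<delta>"
    and hs: "0 < hs" and ht: "0 < ht" and C: "0 < C"
    and bnd: "\<And>\<gamma> c. mabs c \<le> 2 * CARD('n) \<Longrightarrow>
        hs ^ mabs (madd \<gamma> c) * Ms (madd \<gamma> c) \<le> C * (ht ^ mabs \<gamma> * Mt \<gamma>)"
  shows "wnorm_2 Mt ht f \<le> ennreal (C * 2 ^ CARD('n)) * wnorm_inf Ms hs f"
proof (cases "wnorm_inf Ms hs f = top")
  case True
  have "ennreal (C * 2 ^ CARD('n)) \<noteq> 0" using C by simp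
  then show ?thesis using True by (simp add: ennreal_mult_top)
next
  case False
  then obtain n where n: "wnorm_inf Ms hs f = ennreal n" "0 \<le> n"
    by (metis ennreal_cases)
  have "wnorm_2 Mt ht f \<le> ennreal (C * 2 ^ CARD('n)) * ennreal n"
    unfolding wnorm_2_def
  proof (intro SUP_least)
    fix \<alpha> \<beta> :: "'n \<Rightarrow> nat"
    let ?\<gamma> = "madd \<alpha> \<beta>"
    let ?g = "\<lambda>x. complex_of_real (monom_mi \<alpha> x) * mpderiv \<beta> f x"
    define K where "K = n * C * (ht ^ mabs ?\<gamma> * Mt ?\<gamma>)"
    have K: "0 \<le> K" unfolding K_def using n C ht Mt[of ?\<gamma>] by simp
    let ?W = "\<lambda>x::real^'n. \<Prod>i\<in>UNIV. max 1 ((x $ i)\<^sup>2)"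
    let ?P = "\<lambda>x::real^'n. \<Prod>i\<in>UNIV. 1 / max 1 ((x $ i)\<^sup>2)"
    have pt: "(norm (?g x))\<^sup>2 \<le> K\<^sup>2 * ?P x" for x
    proof -
      have W1: "1 \<le> ?W x" by (rule prod_ge_1) auto
      have le: "ennreal (norm (complex_of_real (monom_mi (madd \<alpha> (ex2 x)) x) * mpderiv \<beta> f x))
          \<le> ennreal (n * (hs ^ mabs (madd (madd \<alpha> (ex2 x)) \<beta>) * Ms (madd (madd \<alpha> (ex2 x)) \<beta>)))"
        by (rule order_trans[OF le_sup_norm[where x=x] wnorm_inf_term[of Ms hs f n "madd \<alpha> (ex2 x)" \<beta>]]) (use n hs Ms in auto)
      have nn: "0 \<le> n * (hs ^ mabs (madd (madd \<alpha> (ex2 x)) \<beta>) * Ms (madd (madd \<alpha> (ex2 x)) \<beta>))"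
        using n(2) hs Ms[of "madd (madd \<alpha> (ex2 x)) \<beta>"] by simp
      have "norm (complex_of_real (monom_mi (madd \<alpha> (ex2 x)) x) * mpderiv \<beta> f x)
          \<le> n * (hs ^ mabs (madd (madd \<alpha> (ex2 x)) \<beta>) * Ms (madd (madd \<alpha> (ex2 x)) \<beta>))"
        using le unfolding ennreal_le_iff[OF nn] .
      also have "\<dots> \<le> K" unfolding K_def madd_comm3[of \<alpha> "ex2 x" \<beta>]
        using mult_left_mono[OF bnd[OF mabs_ex2[of x], of ?\<gamma>] n(2)] by (simp add: mult.assoc)
      finally have a1: "norm (complex_of_real (monom_mi (madd \<alpha> (ex2 x)) x) * mpderiv \<beta> f x) \<le> K" .
      have e1: "norm (complex_of_real (monom_mi (madd \<alpha> (ex2 x)) x) * mpderiv \<beta> f x) = norm (?g x) * ?W x"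
        unfolding monom_ex2 using W1 by (simp only: norm_mult norm_of_real abs_mult) (simp add: mult_ac)
      have "(norm (?g x))\<^sup>2 \<le> K\<^sup>2 * (1 / ?W x)"
        by (rule real_aux[OF _ W1]) (use a1 e1 in auto)
      also have "1 / ?W x = ?P x" by (simp add: prod_dividef)
      finally show ?thesis .
    qed
    have cP: "continuous_on UNIV ?P"
      by (intro continuous_intros) auto
    have "(\<integral>\<^sup>+ x. ennreal ((norm (?g x))\<^sup>2) \<partial>lborel) \<le> (\<integral>\<^sup>+ x. ennreal (K\<^sup>2) * ennreal (?P x) \<partial>lborel)"
    proof (rule nn_integral_mono)
      fix x
      have P0: "0 \<le> ?P x" by (rule prod_nonneg) auto
      have "ennreal (K\<^sup>2) * ennreal (?P x) = ennreal (K\<^sup>2 * ?P x)"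
        using P0 by (rule ennreal_mult[symmetric, OF zero_le_power2])
      then show "ennreal ((norm (?g x))\<^sup>2) \<le> ennreal (K\<^sup>2) * ennreal (?P x)"
        using ennreal_leI[OF pt[of x]] by simp
    qed
    also have "\<dots> = ennreal (K\<^sup>2) * (\<integral>\<^sup>+ x. ennreal (?P x) \<partial>lborel)"
      using borel_measurable_continuous_onI[OF cP] by (intro nn_integral_cmult) measurable
    also have "\<dots> \<le> ennreal (K\<^sup>2) * 4 ^ CARD('n)"
      by (rule mult_left_mono[OF prod_psi_int]) simp
    also have "\<dots> = ennreal ((K * 2 ^ CARD('n))\<^sup>2)"
    proof -
      have "(4::ennreal) ^ CARD('n) = ennreal ((2 ^ CARD('n))\<^sup>2)"
        by (simp add: ennreal_power[symmetric] power_mult[symmetric] mult.commute[of _ 2] power_mult)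
      then show ?thesis using K by (simp add: power_mult_distrib ennreal_mult)
    qed
    finally have "L2_norm ?g \<le> ennreal (K * 2 ^ CARD('n))"
      by (rule L2_le') (use K in simp)
    also have "\<dots> = ennreal ((C * 2 ^ CARD('n) * n) * (ht ^ mabs ?\<gamma> * Mt ?\<gamma>))"
      unfolding K_def by (simp add: ac_simps)
    finally have sn: "L2_norm ?g \<le> ennreal ((C * 2 ^ CARD('n) * n) * (ht ^ mabs ?\<gamma> * Mt ?\<gamma>))" .
    have "L2_norm ?g * ennreal (1 / (ht ^ mabs ?\<gamma> * Mt ?\<gamma>)) \<le> ennreal (C * 2 ^ CARD('n) * n)"
      by (rule le_enn_div[OF _ sn]) (use ht Mt[of ?\<gamma>] C n in auto)
    also have "\<dots> = ennreal (C * 2 ^ CARD('n)) * ennreal n" using C n by (simp add: ennreal_mult)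
    finally show "L2_norm ?g * ennreal (1 / (ht ^ mabs ?\<gamma> * Mt ?\<gamma>)) \<le> ennreal (C * 2 ^ CARD('n)) * ennreal n" .
  qed
  then show ?thesis using n by simp
qed

lemma mabs0: "mabs (c :: 'n::finite \<Rightarrow> nat) = 0 \<Longrightarrow> c = (\<lambda>_. 0)"
  unfolding mabs_def by (auto simp: fun_eq_iff)

lemma madd0: "madd \<gamma> (\<lambda>_. 0) = \<gamma>"
  by (simp add: madd_def)

lemma mabs_unit: "mabs (unit_mi (j :: 'n::finite)) = 1"
  by (simp add: mabs_def unit_mi_def)

lemma split_c:
  fixes c :: "'n::finite \<Rightarrow> nat"
  assumes "mabs c = Suc r"
  shows "\<exists>c' j. mabs c' = r \<and> c = madd c' (unit_mi j)"
proof -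
  have "c \<noteq> (\<lambda>_. 0)" using assms by (auto simp: mabs_def)
  then obtain j where j: "c j \<noteq> 0" by auto
  define c' where "c' = (\<lambda>i. if i = j then c i - 1 else c i)"
  have c: "c = madd c' (unit_mi j)" using j by (auto simp: c'_def madd_def unit_mi_def fun_eq_iff)
  then have "mabs c = mabs c' + mabs (unit_mi j)" by (simp only: mabs_madd)
  then have "mabs c = mabs c' + 1" by (simp only: mabs_unit)
  then show ?thesis using c assms by auto
qed

lemma wm_pos: "weight_matrix M \<Longrightarrow> 0 < l \<Longrightarrow> 0 < M l \<alpha>"
  unfolding weight_matrix_def by blast

lemma wm_mono: "weight_matrix M \<Longrightarrow> 0 < l \<Longrightarrow> l \<le> k \<Longrightarrow> M l \<alpha> \<le> M k \<alpha>"
  unfolding weight_matrix_def by blast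

lemma pow_exp_le:
  fixes A :: real
  assumes "1 \<le> A"
  shows "A ^ (g + r + 1) \<le> (A ^ (r + 1)) ^ (g + 1)"
proof -
  have "g + r + 1 \<le> (r + 1) * (g + 1)" by (simp add: algebra_simps)
  then have "A ^ (g + r + 1) \<le> A ^ ((r + 1) * (g + 1))" by (rule power_increasing[OF _ assms])
  then show ?thesis by (simp only: power_mult)
qed

lemma chainB:
  fixes M :: "real \<Rightarrow> ('n::finite \<Rightarrow> nat) \<Rightarrow> real"
  assumes WM: "weight_matrix M"
    and B2: "\<forall>l>0. \<exists>k. 0 < k \<and> k \<le> l \<and> (\<exists>A\<ge>1. \<forall>\<alpha> j. M k (madd \<alpha> (unit_mi j)) \<le> A ^ (mabs \<alpha> + 1) * M l \<alpha>)"
    and l: "0 < l"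
  shows "\<exists>k. 0 < k \<and> k \<le> l \<and> (\<exists>A\<ge>1. \<forall>\<gamma> c. mabs c \<le> r \<longrightarrow> M k (madd \<gamma> c) \<le> A ^ (mabs \<gamma> + 1) * M l \<gamma>)"
proof (induction r)
  case 0
  show ?case
    by (rule exI[of _ l], use l in simp, rule exI[of _ 1]) (auto dest!: mabs0 simp: madd0)
next
  case (Suc r)
  then obtain k1 A1 where k1: "0 < k1" "k1 \<le> l" "1 \<le> A1"
    and h1: "\<And>\<gamma> c. mabs c \<le> r \<Longrightarrow> M k1 (madd \<gamma> c) \<le> A1 ^ (mabs \<gamma> + 1) * M l \<gamma>" by blast
  obtain k2 A2 where k2: "0 < k2" "k2 \<le> k1" "1 \<le> A2"
    and h2: "\<And>\<alpha> j. M k2 (madd \<alpha> (unit_mi j)) \<le> A2 ^ (mabs \<alpha> + 1) * M k1 \<alpha>"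
    using B2 k1(1) by blast
  define A where "A = A2 ^ (r + 1) * A1"
  have p1: "1 \<le> A2 ^ (r + 1)" by (rule one_le_power[OF k2(3)])
  have A1A: "A1 \<le> A" unfolding A_def using mult_right_mono[OF p1, of A1] k1(3) by simp
  have A: "1 \<le> A" using A1A k1(3) by simp
  have Ml: "0 < M l \<gamma>" for \<gamma> using wm_pos[OF WM l] .
  show ?case
  proof (intro exI conjI allI impI)
    show "0 < k2" "k2 \<le> l" "1 \<le> A" using k2 k1 A by auto
    fix \<gamma> c assume c: "mabs (c :: 'n \<Rightarrow> nat) \<le> Suc r"
    show "M k2 (madd \<gamma> c) \<le> A ^ (mabs \<gamma> + 1) * M l \<gamma>"
    proof (cases "mabs c \<le> r")
      case True
      have "M k2 (madd \<gamma> c) \<le> M k1 (madd \<gamma> c)" by (rule wm_mono[OF WM k2(1) k2(2)])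
      also have "\<dots> \<le> A1 ^ (mabs \<gamma> + 1) * M l \<gamma>" by (rule h1[OF True])
      also have "\<dots> \<le> A ^ (mabs \<gamma> + 1) * M l \<gamma>"
        using A1A k1(3) Ml[of \<gamma>] by (intro mult_right_mono power_mono) auto
      finally show ?thesis .
    next
      case False
      then have "mabs c = Suc r" using c by simp
      then obtain c' j where c': "mabs c' = r" "c = madd c' (unit_mi j)" using split_c by blast
      have "M k2 (madd \<gamma> c) = M k2 (madd (madd \<gamma> c') (unit_mi j))" by (simp add: c' madd_assoc)
      also have "\<dots> \<le> A2 ^ (mabs (madd \<gamma> c') + 1) * M k1 (madd \<gamma> c')" by (rule h2)
      also have "\<dots> \<le> A2 ^ (mabs (madd \<gamma> c') + 1) * (A1 ^ (mabs \<gamma> + 1) * M l \<gamma>)"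
        using h1[of c' \<gamma>] c' k2(3) by (intro mult_left_mono) auto
      also have "A2 ^ (mabs (madd \<gamma> c') + 1) \<le> (A2 ^ (r + 1)) ^ (mabs \<gamma> + 1)"
        using pow_exp_le[OF k2(3), of "mabs \<gamma>" r] by (simp add: mabs_madd c')
      then have "A2 ^ (mabs (madd \<gamma> c') + 1) * (A1 ^ (mabs \<gamma> + 1) * M l \<gamma>) \<le> (A2 ^ (r + 1)) ^ (mabs \<gamma> + 1) * (A1 ^ (mabs \<gamma> + 1) * M l \<gamma>)"
        using k1(3) Ml[of \<gamma>] by (intro mult_right_mono) auto
      also have "\<dots> = A ^ (mabs \<gamma> + 1) * M l \<gamma>" by (simp add: A_def power_mult_distrib)
      finally show ?thesis .
    qed
  qed
qed

lemma chainR: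
  fixes M :: "real \<Rightarrow> ('n::finite \<Rightarrow> nat) \<Rightarrow> real"
  assumes WM: "weight_matrix M"
    and R2: "\<forall>l>0. \<exists>k\<ge>l. \<exists>A\<ge>1. \<forall>\<alpha> j. M l (madd \<alpha> (unit_mi j)) \<le> A ^ (mabs \<alpha> + 1) * M k \<alpha>"
  shows "0 < l \<Longrightarrow> \<exists>k\<ge>l. \<exists>A\<ge>1. \<forall>\<gamma> c. mabs c \<le> r \<longrightarrow> M l (madd \<gamma> c) \<le> A ^ (mabs \<gamma> + 1) * M k \<gamma>"
proof (induction r arbitrary: l)
  case 0
  show ?case
    by (rule exI[of _ l], simp, rule exI[of _ 1]) (use 0 wm_pos[OF WM] in \<open>auto dest!: mabs0 simp: madd0\<close>)
next
  case (Suc r l)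
  obtain k0 A0 where k0: "l \<le> k0" "1 \<le> A0"
    and h0: "\<And>\<alpha> j. M l (madd \<alpha> (unit_mi j)) \<le> A0 ^ (mabs \<alpha> + 1) * M k0 \<alpha>"
    using R2 Suc.prems by blast
  have k0p: "0 < k0" using k0 Suc.prems by simp
  obtain k1 A1 where k1: "k0 \<le> k1" "1 \<le> A1"
    and h1: "\<And>\<gamma> c. mabs c \<le> r \<Longrightarrow> M k0 (madd \<gamma> c) \<le> A1 ^ (mabs \<gamma> + 1) * M k1 \<gamma>"
    using Suc.IH[OF k0p] by blast
  define A where "A = A0 ^ (r + 1) * A1"
  have p1: "1 \<le> A0 ^ (r + 1)" by (rule one_le_power[OF k0(2)])
  have A1A: "A1 \<le> A" unfolding A_def using mult_right_mono[OF p1, of A1] k1(2) by simp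
  have A: "1 \<le> A" using A1A k1(2) by simp
  have Mk1: "0 < M k1 \<gamma>" for \<gamma> using wm_pos[OF WM, of k1] k0p k1 by simp
  show ?case
  proof (intro exI conjI allI impI)
    show "l \<le> k1" "1 \<le> A" using k0 k1 A by auto
    fix \<gamma> c assume c: "mabs (c :: 'n \<Rightarrow> nat) \<le> Suc r"
    show "M l (madd \<gamma> c) \<le> A ^ (mabs \<gamma> + 1) * M k1 \<gamma>"
    proof (cases "mabs c \<le> r")
      case True
      have "M l (madd \<gamma> c) \<le> M k0 (madd \<gamma> c)" by (rule wm_mono[OF WM Suc.prems k0(1)])
      also have "\<dots> \<le> A1 ^ (mabs \<gamma> + 1) * M k1 \<gamma>" by (rule h1[OF True])
      also have "\<dots> \<le> A ^ (mabs \<gamma> + 1) * M k1 \<gamma>"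
        using A1A k1(2) Mk1[of \<gamma>] by (intro mult_right_mono power_mono) auto
      finally show ?thesis .
    next
      case False
      then have "mabs c = Suc r" using c by simp
      then obtain c' j where c': "mabs c' = r" "c = madd c' (unit_mi j)" using split_c by blast
      have "M l (madd \<gamma> c) = M l (madd (madd \<gamma> c') (unit_mi j))" by (simp add: c' madd_assoc)
      also have "\<dots> \<le> A0 ^ (mabs (madd \<gamma> c') + 1) * M k0 (madd \<gamma> c')" by (rule h0)
      also have "\<dots> \<le> A0 ^ (mabs (madd \<gamma> c') + 1) * (A1 ^ (mabs \<gamma> + 1) * M k1 \<gamma>)"
        using h1[of c' \<gamma>] c' k0(2) by (intro mult_left_mono) auto
      also have "A0 ^ (mabs (madd \<gamma> c') + 1) \<le> (A0 ^ (r + 1)) ^ (mabs \<gamma> + 1)"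
        using pow_exp_le[OF k0(2), of "mabs \<gamma>" r] by (simp add: mabs_madd c')
      then have "A0 ^ (mabs (madd \<gamma> c') + 1) * (A1 ^ (mabs \<gamma> + 1) * M k1 \<gamma>) \<le> (A0 ^ (r + 1)) ^ (mabs \<gamma> + 1) * (A1 ^ (mabs \<gamma> + 1) * M k1 \<gamma>)"
        using k1(2) Mk1[of \<gamma>] by (intro mult_right_mono) auto
      also have "\<dots> = A ^ (mabs \<gamma> + 1) * M k1 \<gamma>" by (simp add: A_def power_mult_distrib)
      finally show ?thesis .
    qed
  qed
qed

lemma WLB:
  fixes M :: "real \<Rightarrow> ('n::finite \<Rightarrow> nat) \<Rightarrow> real"
  assumes WM: "weight_matrix M"
    and B2: "\<forall>l>0. \<exists>k. 0 < k \<and> k \<le> l \<and> (\<exists>A\<ge>1. \<forall>\<alpha> j. M k (madd \<alpha> (unit_mi j)) \<le> A ^ (mabs \<alpha> + 1) * M l \<alpha>)"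
    and l: "0 < l" and h: "0 < h"
  shows "\<exists>k. 0 < k \<and> k \<le> l \<and> (\<exists>h'>0. \<forall>\<gamma> c. mabs c \<le> r \<longrightarrow>
     h' ^ mabs (madd \<gamma> c) * M k (madd \<gamma> c) \<le> 1 * (h ^ mabs \<gamma> * M l \<gamma>))"
proof -
  obtain k A where k: "0 < k" "k \<le> l" "1 \<le> A"
    and hk: "\<And>\<gamma> c. mabs c \<le> r \<Longrightarrow> M k (madd \<gamma> c) \<le> A ^ (mabs \<gamma> + 1) * M l \<gamma>"
    using chainB[OF WM B2 l, of r] by blast
  define m where "m = min 1 h"
  define h' where "h' = m / A"
  have m: "0 < m" "m \<le> 1" "m \<le> h" using h by (auto simp: m_def)
  have "m * 1 \<le> m * A" using m k(3) by (intro mult_left_mono) auto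
  then have hm: "h' \<le> m" using k(3) by (simp add: h'_def pos_divide_le_eq)
  have h': "0 < h'" "h' \<le> 1" "h' \<le> h" "h' * A = m"
    using m k(3) hm by (auto simp: h'_def)
  have Mk: "0 < M k \<gamma>" for \<gamma> using wm_pos[OF WM k(1)] .
  have Ml: "0 < M l \<gamma>" for \<gamma> using wm_pos[OF WM l] .
  show ?thesis
  proof (intro exI conjI allI impI)
    show "0 < k" "k \<le> l" "0 < h'" using k h' by auto
    fix \<gamma> c assume c: "mabs (c :: 'n \<Rightarrow> nat) \<le> r"
    show "h' ^ mabs (madd \<gamma> c) * M k (madd \<gamma> c) \<le> 1 * (h ^ mabs \<gamma> * M l \<gamma>)"
    proof (cases "mabs c = 0")
      case True
      then have c0: "madd \<gamma> c = \<gamma>" by (auto dest!: mabs0 simp: madd0)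
      show ?thesis unfolding c0 using h' Mk[of \<gamma>] wm_mono[OF WM k(1) k(2), of \<gamma>]
        by (simp, intro mult_mono power_mono) auto
    next
      case False
      have "h' ^ mabs (madd \<gamma> c) \<le> h' ^ (mabs \<gamma> + 1)"
        using False h' by (intro power_decreasing) (auto simp: mabs_madd)
      then have "h' ^ mabs (madd \<gamma> c) * M k (madd \<gamma> c) \<le> h' ^ (mabs \<gamma> + 1) * (A ^ (mabs \<gamma> + 1) * M l \<gamma>)"
        using hk[OF c, of \<gamma>] h' less_imp_le[OF Mk] by (intro mult_mono) auto
      also have "\<dots> = m ^ (mabs \<gamma> + 1) * M l \<gamma>"
        by (simp add: h'(4)[symmetric] power_mult_distrib)
      also have "\<dots> \<le> m ^ mabs \<gamma> * M l \<gamma>"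
        using m Ml[of \<gamma>] by (intro mult_right_mono power_decreasing) auto
      also have "\<dots> \<le> h ^ mabs \<gamma> * M l \<gamma>"
        using m Ml[of \<gamma>] by (intro mult_right_mono power_mono) auto
      finally show ?thesis by simp
    qed
  qed
qed

lemma WLR:
  fixes M :: "real \<Rightarrow> ('n::finite \<Rightarrow> nat) \<Rightarrow> real"
  assumes WM: "weight_matrix M"
    and R2: "\<forall>l>0. \<exists>k\<ge>l. \<exists>A\<ge>1. \<forall>\<alpha> j. M l (madd \<alpha> (unit_mi j)) \<le> A ^ (mabs \<alpha> + 1) * M k \<alpha>"
    and l: "0 < l" and h: "0 < h"
  shows "\<exists>k\<ge>l. \<exists>h'>0. \<exists>C>0. \<forall>\<gamma> c. mabs c \<le> r \<longrightarrow>
     h ^ mabs (madd \<gamma> c) * M l (madd \<gamma> c) \<le> C * (h' ^ mabs \<gamma> * M k \<gamma>)"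
proof -
  obtain k A where k: "l \<le> k" "1 \<le> A"
    and hk: "\<And>\<gamma> c. mabs c \<le> r \<Longrightarrow> M l (madd \<gamma> c) \<le> A ^ (mabs \<gamma> + 1) * M k \<gamma>"
    using chainR[OF WM R2 l, of r] by blast
  define m where "m = max 1 h"
  have m: "1 \<le> m" "h \<le> m" by (auto simp: m_def)
  have Mk: "0 < M k \<gamma>" for \<gamma> using wm_pos[OF WM, of k] l k by simp
  have Ml: "0 < M l \<gamma>" for \<gamma> using wm_pos[OF WM l] .
  show ?thesis
  proof (intro exI conjI allI impI)
    show "l \<le> k" "0 < h * A" "0 < A * m ^ r" using k h m by auto
    fix \<gamma> c assume c: "mabs (c :: 'n \<Rightarrow> nat) \<le> r"
    have "h ^ mabs c \<le> m ^ mabs c" using h m by (intro power_mono) auto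
    also have "\<dots> \<le> m ^ r" using m c by (intro power_increasing) auto
    finally have hc: "h ^ mabs c \<le> m ^ r" .
    have "h ^ mabs (madd \<gamma> c) * M l (madd \<gamma> c) = h ^ mabs \<gamma> * h ^ mabs c * M l (madd \<gamma> c)"
      by (simp add: mabs_madd power_add)
    also have "\<dots> \<le> h ^ mabs \<gamma> * m ^ r * (A ^ (mabs \<gamma> + 1) * M k \<gamma>)"
      using hc hk[OF c, of \<gamma>] h m less_imp_le[OF Ml] by (intro mult_mono) auto
    also have "\<dots> = A * m ^ r * ((h * A) ^ mabs \<gamma> * M k \<gamma>)"
      by (simp add: power_mult_distrib ac_simps)
    finally show "h ^ mabs (madd \<gamma> c) * M l (madd \<gamma> c) \<le> A * m ^ r * ((h * A) ^ mabs \<gamma> * M k \<gamma>)" .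
  qed
qed

lemma beur1:
  fixes M :: "real \<Rightarrow> ('n::finite \<Rightarrow> nat) \<Rightarrow> real"
  assumes WM: "weight_matrix M"
    and B2: "\<forall>l>0. \<exists>k. 0 < k \<and> k \<le> l \<and> (\<exists>A\<ge>1. \<forall>\<alpha> j.
        M k (madd \<alpha> (unit_mi j)) \<le> A ^ (mabs \<alpha> + 1) * M l \<alpha>)"
  shows "\<exists>C1>0. \<forall>l>0. \<forall>h>0. \<exists>k>0. \<exists>h'>0. \<forall>f. smooth f \<longrightarrow>
        wnorm_2 (M l) h f \<le> ennreal C1 * wnorm_inf (M k) h' f"
proof -
  have pos: "\<And>l \<alpha>. 0 < l \<Longrightarrow> 0 < M l \<alpha>" using wm_pos[OF WM] .
  have "\<forall>l>0. \<forall>h>0. \<exists>k>0. \<exists>h'>0. \<forall>f. smooth f \<longrightarrow>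
        wnorm_2 (M l) h f \<le> ennreal (2 ^ CARD('n)) * wnorm_inf (M k) h' f"
  proof (intro allI impI)
    fix l h :: real assume l: "0 < l" and h: "0 < h"
    obtain k h' where k: "0 < k" "k \<le> l" and h': "0 < h'"
      and bnd: "\<And>\<gamma> c. mabs c \<le> 2 * CARD('n) \<Longrightarrow> h' ^ mabs (madd \<gamma> c) * M k (madd \<gamma> c) \<le> 1 * (h ^ mabs \<gamma> * M l \<gamma>)"
      using WLB[OF WM B2 l h, of "2 * CARD('n)"] by blast
    have "\<forall>f. smooth f \<longrightarrow> wnorm_2 (M l) h f \<le> ennreal (2 ^ CARD('n)) * wnorm_inf (M k) h' f"
      using L2_le_sup[OF _ pos[OF k(1)] pos[OF l] h' h zero_less_one bnd] by simp
    then show "\<exists>k>0. \<exists>h'>0. \<forall>f. smooth f \<longrightarrow> wnorm_2 (M l) h f \<le> ennreal (2 ^ CARD('n)) * wnorm_inf (M k) h' f"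
      using k h' by blast
  qed
  moreover have "(0::real) < 2 ^ CARD('n)" by simp
  ultimately show ?thesis by blast
qed

lemma beur2:
  fixes M :: "real \<Rightarrow> ('n::finite \<Rightarrow> nat) \<Rightarrow> real"
  assumes WM: "weight_matrix M"
    and B2: "\<forall>l>0. \<exists>k. 0 < k \<and> k \<le> l \<and> (\<exists>A\<ge>1. \<forall>\<alpha> j.
        M k (madd \<alpha> (unit_mi j)) \<le> A ^ (mabs \<alpha> + 1) * M l \<alpha>)"
  shows "\<forall>l>0. \<forall>h>0. \<exists>k'>0. \<exists>C>0. \<exists>h'>0. \<forall>f. smooth f \<longrightarrow>
        wnorm_inf (M l) h f \<le> ennreal C * wnorm_2 (M k') h' f"
proof (intro allI impI)
  have pos: "\<And>l \<alpha>. 0 < l \<Longrightarrow> 0 < M l \<alpha>" using wm_pos[OF WM] .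
  let ?Q = "sqrt (2 ^ CARD('n) * real (card (SL (Basis :: (real^'n) set))))"
  have Q: "0 < ?Q" using SL_card_pos[where 'n='n] by simp
  fix l h :: real assume l: "0 < l" and h: "0 < h"
  obtain k h' where k: "0 < k" "k \<le> l" and h': "0 < h'"
    and bnd: "\<And>\<gamma> c. mabs c \<le> CARD('n) \<Longrightarrow> h' ^ mabs (madd \<gamma> c) * M k (madd \<gamma> c) \<le> 1 * (h ^ mabs \<gamma> * M l \<gamma>)"
    using WLB[OF WM B2 l h, of "CARD('n)"] by blast
  have "\<forall>f. smooth f \<longrightarrow> wnorm_inf (M l) h f \<le> ennreal ?Q * wnorm_2 (M k) h' f"
    using sup_le_L2[OF _ pos[OF k(1)] pos[OF l] h' h zero_less_one bnd] by simp
  then show "\<exists>k'>0. \<exists>C>0. \<exists>h'>0. \<forall>f. smooth f \<longrightarrow> wnorm_inf (M l) h f \<le> ennreal C * wnorm_2 (M k') h' f"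
    using k h' Q by blast
qed

lemma roum1:
  fixes M :: "real \<Rightarrow> ('n::finite \<Rightarrow> nat) \<Rightarrow> real"
  assumes WM: "weight_matrix M"
    and R2: "\<forall>l>0. \<exists>k\<ge>l. \<exists>A\<ge>1. \<forall>\<alpha> j.
        M l (madd \<alpha> (unit_mi j)) \<le> A ^ (mabs \<alpha> + 1) * M k \<alpha>"
  shows "\<forall>l>0. \<forall>h>0. \<exists>C>0. \<exists>k\<ge>l. \<exists>h'>0. \<forall>f. smooth f \<longrightarrow>
        wnorm_2 (M k) h' f \<le> ennreal C * wnorm_inf (M l) h f"
proof (intro allI impI)
  have pos: "\<And>l \<alpha>. 0 < l \<Longrightarrow> 0 < M l \<alpha>" using wm_pos[OF WM] .
  fix l h :: real assume l: "0 < l" and h: "0 < h"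
  obtain k h' C where k: "l \<le> k" and h': "0 < h'" and C: "0 < C"
    and bnd: "\<And>\<gamma> c. mabs c \<le> 2 * CARD('n) \<Longrightarrow> h ^ mabs (madd \<gamma> c) * M l (madd \<gamma> c) \<le> C * (h' ^ mabs \<gamma> * M k \<gamma>)"
    using WLR[OF WM R2 l h, of "2 * CARD('n)"] by blast
  have kp: "0 < k" using k l by simp
  have "\<forall>f. smooth f \<longrightarrow> wnorm_2 (M k) h' f \<le> ennreal (C * 2 ^ CARD('n)) * wnorm_inf (M l) h f"
    using L2_le_sup[OF _ pos[OF l] pos[OF kp] h h' C bnd] by simp
  moreover have "0 < C * 2 ^ CARD('n)" using C by simp
  ultimately show "\<exists>C>0. \<exists>k\<ge>l. \<exists>h'>0. \<forall>f. smooth f \<longrightarrow> wnorm_2 (M k) h' f \<le> ennreal C * wnorm_inf (M l) h f"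
    using k h' by blast
qed

lemma roum2:
  fixes M :: "real \<Rightarrow> ('n::finite \<Rightarrow> nat) \<Rightarrow> real"
  assumes WM: "weight_matrix M"
    and R2: "\<forall>l>0. \<exists>k\<ge>l. \<exists>A\<ge>1. \<forall>\<alpha> j.
        M l (madd \<alpha> (unit_mi j)) \<le> A ^ (mabs \<alpha> + 1) * M k \<alpha>"
  shows "\<forall>l>0. \<forall>h>0. \<exists>C>0. \<exists>k'>0. \<exists>h'>0. \<forall>f. smooth f \<longrightarrow>
        wnorm_inf (M k') h' f \<le> ennreal C * wnorm_2 (M l) h f"
proof (intro allI impI)
  have pos: "\<And>l \<alpha>. 0 < l \<Longrightarrow> 0 < M l \<alpha>" using wm_pos[OF WM] .
  let ?Q = "sqrt (2 ^ CARD('n) * real (card (SL (Basis :: (real^'n) set))))"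
  have Q: "0 < ?Q" using SL_card_pos[where 'n='n] by simp
  fix l h :: real assume l: "0 < l" and h: "0 < h"
  obtain k h' C where k: "l \<le> k" and h': "0 < h'" and C: "0 < C"
    and bnd: "\<And>\<gamma> c. mabs c \<le> CARD('n) \<Longrightarrow> h ^ mabs (madd \<gamma> c) * M l (madd \<gamma> c) \<le> C * (h' ^ mabs \<gamma> * M k \<gamma>)"
    using WLR[OF WM R2 l h, of "CARD('n)"] by blast
  have kp: "0 < k" using k l by simp
  have "\<forall>f. smooth f \<longrightarrow> wnorm_inf (M k) h' f \<le> ennreal (C * ?Q) * wnorm_2 (M l) h f"
    using sup_le_L2[OF _ pos[OF l] pos[OF kp] h h' C bnd] by simp
  moreover have "0 < C * ?Q" using C Q by simp
  ultimately show "\<exists>C>0. \<exists>k'>0. \<exists>h'>0. \<forall>f. smooth f \<longrightarrow> wnorm_inf (M k') h' f \<le> ennreal C * wnorm_2 (M l) h f"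
    using kp h' by blast
qed

theorem proposition3p4:
  fixes M :: "real \<Rightarrow> ('n::finite \<Rightarrow> nat) \<Rightarrow> real"
  assumes WM: "weight_matrix M"
  shows
  "((\<forall>l>0. \<exists>k. 0 < k \<and> k \<le> l \<and> (\<exists>H>0. \<forall>C>0. \<exists>B>0. \<forall>\<alpha> \<beta>.
        mi_halfpow \<alpha> * M k \<beta> \<le> B * C ^ mabs \<alpha> * H ^ mabs (madd \<alpha> \<beta>) * M l (madd \<alpha> \<beta>))) \<and>
    (\<forall>l>0. \<exists>k. 0 < k \<and> k \<le> l \<and> (\<exists>A\<ge>1. \<forall>\<alpha> j.
        M k (madd \<alpha> (unit_mi j)) \<le> A ^ (mabs \<alpha> + 1) * M l \<alpha>))
   \<longrightarrow>
    (\<exists>C1>0. \<forall>l>0. \<forall>h>0. \<exists>k>0. \<exists>h'>0. \<forall>f. smooth f \<longrightarrow>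
        wnorm_2 (M l) h f \<le> ennreal C1 * wnorm_inf (M k) h' f) \<and>
    (\<forall>l>0. \<forall>h>0. \<exists>k'>0. \<exists>C>0. \<exists>h'>0. \<forall>f. smooth f \<longrightarrow>
        wnorm_inf (M l) h f \<le> ennreal C * wnorm_2 (M k') h' f))
  \<and>
   ((\<forall>l>0. \<exists>k\<ge>l. \<exists>B>0. \<exists>C>0. \<exists>H>0. \<forall>\<alpha> \<beta>.
        mi_halfpow \<alpha> * M l \<beta> \<le> B * C ^ mabs \<alpha> * H ^ mabs (madd \<alpha> \<beta>) * M k (madd \<alpha> \<beta>)) \<and>
    (\<forall>l>0. \<exists>k\<ge>l. \<exists>A\<ge>1. \<forall>\<alpha> j.
        M l (madd \<alpha> (unit_mi j)) \<le> A ^ (mabs \<alpha> + 1) * M k \<alpha>)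
   \<longrightarrow>
    (\<forall>l>0. \<forall>h>0. \<exists>C>0. \<exists>k\<ge>l. \<exists>h'>0. \<forall>f. smooth f \<longrightarrow>
        wnorm_2 (M k) h' f \<le> ennreal C * wnorm_inf (M l) h f) \<and>
    (\<forall>l>0. \<forall>h>0. \<exists>C>0. \<exists>k'>0. \<exists>h'>0. \<forall>f. smooth f \<longrightarrow>
        wnorm_inf (M k') h' f \<le> ennreal C * wnorm_2 (M l) h f))"
proof (intro conjI impI)
  assume "(\<forall>l>0. \<exists>k. 0 < k \<and> k \<le> l \<and> (\<exists>H>0. \<forall>C>0. \<exists>B>0. \<forall>\<alpha> \<beta>.
        mi_halfpow \<alpha> * M k \<beta> \<le> B * C ^ mabs \<alpha> * H ^ mabs (madd \<alpha> \<beta>) * M l (madd \<alpha> \<beta>))) \<and>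
    (\<forall>l>0. \<exists>k. 0 < k \<and> k \<le> l \<and> (\<exists>A\<ge>1. \<forall>\<alpha> j.
        M k (madd \<alpha> (unit_mi j)) \<le> A ^ (mabs \<alpha> + 1) * M l \<alpha>))"
  then have B2: "\<forall>l>0. \<exists>k. 0 < k \<and> k \<le> l \<and> (\<exists>A\<ge>1. \<forall>\<alpha> j.
        M k (madd \<alpha> (unit_mi j)) \<le> A ^ (mabs \<alpha> + 1) * M l \<alpha>)" by blast
  show "\<exists>C1>0. \<forall>l>0. \<forall>h>0. \<exists>k>0. \<exists>h'>0. \<forall>f. smooth f \<longrightarrow>
        wnorm_2 (M l) h f \<le> ennreal C1 * wnorm_inf (M k) h' f"
    by (rule beur1[OF WM B2])
  show "\<forall>l>0. \<forall>h>0. \<exists>k'>0. \<exists>C>0. \<exists>h'>0. \<forall>f. smooth f \<longrightarrow>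
        wnorm_inf (M l) h f \<le> ennreal C * wnorm_2 (M k') h' f"
    by (rule beur2[OF WM B2])
next
  assume "(\<forall>l>0. \<exists>k\<ge>l. \<exists>B>0. \<exists>C>0. \<exists>H>0. \<forall>\<alpha> \<beta>.
        mi_halfpow \<alpha> * M l \<beta> \<le> B * C ^ mabs \<alpha> * H ^ mabs (madd \<alpha> \<beta>) * M k (madd \<alpha> \<beta>)) \<and>
    (\<forall>l>0. \<exists>k\<ge>l. \<exists>A\<ge>1. \<forall>\<alpha> j.
        M l (madd \<alpha> (unit_mi j)) \<le> A ^ (mabs \<alpha> + 1) * M k \<alpha>)"
  then have R2: "\<forall>l>0. \<exists>k\<ge>l. \<exists>A\<ge>1. \<forall>\<alpha> j.
        M l (madd \<alpha> (unit_mi j)) \<le> A ^ (mabs \<alpha> + 1) * M k \<alpha>" by blast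
  show "\<forall>l>0. \<forall>h>0. \<exists>C>0. \<exists>k\<ge>l. \<exists>h'>0. \<forall>f. smooth f \<longrightarrow>
        wnorm_2 (M k) h' f \<le> ennreal C * wnorm_inf (M l) h f"
    by (rule roum1[OF WM R2])
  show "\<forall>l>0. \<forall>h>0. \<exists>C>0. \<exists>k'>0. \<exists>h'>0. \<forall>f. smooth f \<longrightarrow>
        wnorm_inf (M k') h' f \<le> ennreal C * wnorm_2 (M l) h f"
    by (rule roum2[OF WM R2])
qed

end
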